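(* Let $R$ be a ring and let $P$ be a polygon divided into subpolygons $P^1,\ldots,P^{\kappa+1}$ by the dissection $E=\{(t_1,v_1),(v_1,t_1),\ldots,(t_\kappa,v_\kappa),(v_\kappa,t_\kappa)\}$ for some $\kappa\geqslant0$. For each $\alpha$ let $c^\alpha:\operatorname{diag}P^\alpha\to R^*$ be a frieze, and assume $c^\alpha_{tv}=c^\beta_{tv}$ whenever $(t,v)\in E\cap\operatorname{diag}P^\alpha\cap\operatorname{diag}P^\beta$. Then there exists a unique map $c:\operatorname{diag}P\to R$ such that (i) $c|_{\operatorname{diag}P^\alpha}=c^\alpha$ for each $\alpha$, and (ii) $c$ is a weak frieze with respect to $E$. Moreover, if this $c$ takes all its values in $R^*$, then $c$ is a frieze.
   Context: $R^*$ denotes the invertible elements of $R$. A polygon $P$ is a finite set of at least three vertices with a cyclic ordering (thought of as a convex polygon in the plane); a subpolygon is a subset of at least three vertices with the induced cyclic ordering. $\operatorname{diag}P$ is the set of ordered pairs of distinct vertices (diagonals). A diagonal is an edge if its endpoints are neighbours, otherwise internal. $(i,k)$ and $(j,\ell)$ cross if $i,j,k,\ell$ are pairwise distinct with $i<j<k<\ell$ or $i<\ell<k<j$ cyclically. A dissection is a set of internal diagonals closed under reversal with no two crossing; it divides $P$ into the subpolygons whose edges are diagonals in the dissection or edges of $P$. Write $c_{ik}=c(i,k)$, $c_{xx}=0$. A map $c:\operatorname{diag}P\to R^*$ is a frieze if for all pairwise distinct $i,j,k$: $c_{ij}c_{kj}^{-1}c_{ki}=c_{ik}c_{jk}^{-1}c_{ji}$,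 and whenever $(i,k)$ and $(j,\ell)$ cross: $c_{ik}=c_{ij}c_{\ell j}^{-1}c_{\ell k}+c_{i\ell}c_{j\ell}^{-1}c_{jk}$. A map $c:\operatorname{diag}P\to R$ is a weak frieze with respect to a dissection $D$ if $c_{tv}\in R^*$ for $(t,v)\in D$ and whenever $(i,k)$ crosses $(t,v)$ with $(t,v),(v,t)\in D$, $c_{ik}=c_{it}c_{vt}^{-1}c_{vk}+c_{iv}c_{tv}^{-1}c_{tk}$. *)

theory Defs
  imports Main
begin

definition runit :: "'a::ring_1 \<Rightarrow> bool" where
  "runit x \<longleftrightarrow> (\<exists>y. x * y = 1 \<and> y * x = 1)"

definition rinv :: "'a::ring_1 \<Rightarrow> 'a" where
  "rinv x = (THE y. x * y = 1 \<and> y * x = 1)"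

(* A polygon is a finite set of at least three vertices of a linearly ordered
   type; its cyclic ordering is the one induced by the linear order.
   Subpolygons carry the induced cyclic ordering. *)
definition polygon :: "'v::linorder set \<Rightarrow> bool" where
  "polygon P \<longleftrightarrow> finite P \<and> 3 \<le> card P"

definition cyc3 :: "'v::linorder \<Rightarrow> 'v \<Rightarrow> 'v \<Rightarrow> bool" where
  "cyc3 a b c \<longleftrightarrow> (a < b \<and> b < c) \<or> (b < c \<and> c < a) \<or> (c < a \<and> a < b)"

definition cyc4 :: "'v::linorder \<Rightarrow> 'v \<Rightarrow> 'v \<Rightarrow> 'v \<Rightarrow> bool" where
  "cyc4 a b c d \<longleftrightarrow> (a < b \<and> b < c \<and> c < d) \<or> (b < c \<and> c < d \<and> d < a)
                   \<or> (c < d \<and> d < a \<and> a < b) \<or> (d < a \<and> a < b \<and> b < c)"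

definition diag :: "'v set \<Rightarrow> ('v \<times> 'v) set" where
  "diag P = {(i, k). i \<in> P \<and> k \<in> P \<and> i \<noteq> k}"

definition is_edge :: "'v::linorder set \<Rightarrow> 'v \<times> 'v \<Rightarrow> bool" where
  "is_edge P d \<longleftrightarrow> d \<in> diag P \<and>
     ((\<not> (\<exists>x\<in>P. cyc3 (fst d) x (snd d))) \<or> (\<not> (\<exists>x\<in>P. cyc3 (snd d) x (fst d))))"

definition internal :: "'v::linorder set \<Rightarrow> 'v \<times> 'v \<Rightarrow> bool" where
  "internal P d \<longleftrightarrow> d \<in> diag P \<and> \<not> is_edge P d"

definition crosses :: "'v::linorder \<times> 'v \<Rightarrow> 'v \<times> 'v \<Rightarrow> bool" where
  "crosses d e \<longleftrightarrow> (let i = fst d; k = snd d; j = fst e; l = snd e in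
     distinct [i, j, k, l] \<and> (cyc4 i j k l \<or> cyc4 i l k j))"

definition dissection :: "'v::linorder set \<Rightarrow> ('v \<times> 'v) set \<Rightarrow> bool" where
  "dissection P D \<longleftrightarrow> (\<forall>d\<in>D. internal P d) \<and> (\<forall>(a, b)\<in>D. (b, a) \<in> D)
      \<and> (\<forall>d\<in>D. \<forall>e\<in>D. \<not> crosses d e)"

(* Q is one of the subpolygons into which the dissection D divides P:
   every edge of Q is a diagonal in D or an edge of P, and no diagonal of D
   runs through the interior of Q. *)
definition piece :: "'v::linorder set \<Rightarrow> ('v \<times> 'v) set \<Rightarrow> 'v set \<Rightarrow> bool" where
  "piece P D Q \<longleftrightarrow> Q \<subseteq> P \<and> 3 \<le> card Q
      \<and> (\<forall>d. is_edge Q d \<longrightarrow> d \<in> D \<or> is_edge P d)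
      \<and> (\<forall>d\<in>D. d \<in> diag Q \<longrightarrow> is_edge Q d)"

definition frieze :: "'v::linorder set \<Rightarrow> ('v \<times> 'v \<Rightarrow> 'a::ring_1) \<Rightarrow> bool" where
  "frieze P c \<longleftrightarrow>
     (\<forall>d\<in>diag P. runit (c d))
   \<and> (\<forall>i\<in>P. \<forall>j\<in>P. \<forall>k\<in>P. distinct [i, j, k] \<longrightarrow>
        c (i, j) * rinv (c (k, j)) * c (k, i) = c (i, k) * rinv (c (j, k)) * c (j, i))
   \<and> (\<forall>i\<in>P. \<forall>j\<in>P. \<forall>k\<in>P. \<forall>l\<in>P. crosses (i, k) (j, l) \<longrightarrow>
        c (i, k) = c (i, j) * rinv (c (l, j)) * c (l, k) + c (i, l) * rinv (c (j, l)) * c (j, k))"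

definition weak_frieze :: "'v::linorder set \<Rightarrow> ('v \<times> 'v) set \<Rightarrow> ('v \<times> 'v \<Rightarrow> 'a::ring_1) \<Rightarrow> bool" where
  "weak_frieze P D c \<longleftrightarrow>
     (\<forall>d\<in>D. runit (c d))
   \<and> (\<forall>i\<in>P. \<forall>k\<in>P. \<forall>t v. (t, v) \<in> D \<and> (v, t) \<in> D \<and> crosses (i, k) (t, v) \<longrightarrow>
        c (i, k) = c (i, t) * rinv (c (v, t)) * c (v, k) + c (i, v) * rinv (c (t, v)) * c (t, k))"

end

theory Submission
  imports Defs
begin


lemma rinv_unique:
  fixes x y :: "'a::ring_1"
  assumes "x * y = 1" "y * x = 1"
  shows "rinv x = y"
proof -
  have uniq: "\<And>y'. x * y' = 1 \<and> y' * x = 1 \<Longrightarrow> y' = y"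
  proof -
    fix y' assume h: "x * y' = 1 \<and> y' * x = 1"
    have "y' = y' * (x * y)" using assms by simp
    also have "\<dots> = (y' * x) * y" by (simp add: mult.assoc)
    also have "\<dots> = y" using h by simp
    finally show "y' = y" .
  qed
  show ?thesis unfolding rinv_def
    using assms uniq by (intro the_equality) blast+
qed

lemma runit_inv:
  fixes x :: "'a::ring_1"
  assumes "runit x"
  shows "x * rinv x = 1" "rinv x * x = 1"
proof -
  obtain y where "x * y = 1" "y * x = 1" using assms unfolding runit_def by blast
  then have "rinv x = y" by (rule rinv_unique)
  then show "x * rinv x = 1" "rinv x * x = 1" using \<open>x * y = 1\<close> \<open>y * x = 1\<close> by auto
qed

lemma runit_cancel [simp]:
  fixes x :: "'a::ring_1"
  assumes "runit x"
  shows "x * (rinv x * y) = y" "rinv x * (x * y) = y"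
  using runit_inv[OF assms] by (simp_all add: mult.assoc[symmetric])

lemma runit_cancel' [simp]:
  fixes x :: "'a::ring_1"
  assumes "runit x"
  shows "x * rinv x = 1" "rinv x * x = 1"
  using runit_inv[OF assms] by simp_all

lemma runit_one [simp]: "runit (1::'a::ring_1)"
  unfolding runit_def by (rule exI[of _ 1]) simp

lemma rinv_one [simp]: "rinv (1::'a::ring_1) = 1"
  by (rule rinv_unique) simp_all

lemma runit_rinv [simp]:
  fixes x :: "'a::ring_1"
  assumes "runit x" shows "runit (rinv x)"
  using runit_inv[OF assms] unfolding runit_def by blast

lemma rinv_rinv [simp]:
  fixes x :: "'a::ring_1"
  assumes "runit x" shows "rinv (rinv x) = x"
  using runit_inv[OF assms] by (intro rinv_unique) simp_all

lemma runit_mult [simp, intro]: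
  fixes x y :: "'a::ring_1"
  assumes "runit x" "runit y" shows "runit (x * y)"
  unfolding runit_def
  by (rule exI[of _ "rinv y * rinv x"])
     (simp add: mult.assoc assms)

lemma rinv_mult:
  fixes x y :: "'a::ring_1"
  assumes "runit x" "runit y" shows "rinv (x * y) = rinv y * rinv x"
  by (rule rinv_unique) (simp_all add: mult.assoc assms)

lemma runit_uminus [simp]:
  fixes x :: "'a::ring_1"
  shows "runit (- x) = runit x"
proof
  assume "runit (-x)"
  then obtain y where "-x * y = 1" "y * -x = 1" unfolding runit_def by blast
  then show "runit x" unfolding runit_def by (intro exI[of _ "-y"]) simp
next
  assume "runit x"
  then obtain y where "x * y = 1" "y * x = 1" unfolding runit_def by blast
  then show "runit (-x)" unfolding runit_def by (intro exI[of _ "-y"]) simp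
qed

lemma rinv_uminus:
  fixes x :: "'a::ring_1"
  assumes "runit x" shows "rinv (- x) = - rinv x"
  by (rule rinv_unique) (simp_all add: assms)

lemma runit_factor_right:
  fixes x y :: "'a::ring_1"
  assumes "runit x" "runit (x * y)" shows "runit y"
proof -
  have "y = rinv x * (x * y)" using assms by simp
  then show ?thesis using assms by (metis runit_mult runit_rinv)
qed

lemma runit_factor_left:
  fixes x y :: "'a::ring_1"
  assumes "runit y" "runit (x * y)" shows "runit x"
proof -
  have "x = (x * y) * rinv y" using assms by (simp add: mult.assoc)
  then show ?thesis using assms by (metis runit_mult runit_rinv)
qed


lemmas ordf = less_trans less_irrefl linorder_neqE order.strict_implies_not_eq

lemma crosses_iff:
  "crosses (i,k) (j,l) \<longleftrightarrow> (cyc3 i j k \<and> cyc3 k l i) \<or> (cyc3 i l k \<and> cyc3 k j i)"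
  unfolding crosses_def cyc3_def cyc4_def Let_def
  by (smt (z3) ordf fst_conv snd_conv distinct_length_2_or_more distinct_singleton)

lemma cyc3_rot: "cyc3 a b c \<longleftrightarrow> cyc3 b c a"
  unfolding cyc3_def by (smt (z3) ordf)

lemma cyc3_dist: "cyc3 a b c \<Longrightarrow> a \<noteq> b \<and> b \<noteq> c \<and> a \<noteq> c"
  unfolding cyc3_def by (smt (z3) ordf)

lemma cyc3_asym: "cyc3 a b c \<Longrightarrow> \<not> cyc3 a c b"
  unfolding cyc3_def by (smt (z3) ordf)

lemma cyc3_total: "a \<noteq> b \<Longrightarrow> b \<noteq> c \<Longrightarrow> a \<noteq> c \<Longrightarrow> cyc3 a b c \<or> cyc3 a c b"
  unfolding cyc3_def by (smt (z3) ordf)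

definition lt :: "'v::linorder \<Rightarrow> 'v \<Rightarrow> 'v \<Rightarrow> bool" where
  "lt t a b \<longleftrightarrow> a = t \<or> (b \<noteq> t \<and> cyc3 t a b)"

lemma cross_parity:
  assumes "crosses (i,k) (j,l)"
  shows "(lt t i j = lt t l j) = (lt t l k = lt t i k)"
  using assms unfolding crosses_def cyc3_def cyc4_def Let_def lt_def
  by (smt (z3) ordf fst_conv snd_conv distinct_length_2_or_more distinct_singleton)


definition sg :: "'v::linorder \<Rightarrow> 'v \<Rightarrow> 'v \<Rightarrow> 'a::ring_1" where
  "sg t i k = (if lt t i k then 1 else -1)"

lemma sg_cases: "sg t i k = (1::'a::ring_1) \<or> sg t i k = (-1 :: 'a)"
  unfolding sg_def by auto

lemma sg_sq [simp]: "sg t i k * (sg t i k :: 'a::ring_1) = 1"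
  unfolding sg_def by auto

lemma sg_comm: "sg t i k * (x::'a::ring_1) = x * sg t i k"
  unfolding sg_def by auto

lemma sg_anti:
  assumes "i \<noteq> k" shows "sg t k i = - (sg t i k :: 'a::ring_1)"
proof -
  have "lt t k i \<longleftrightarrow> \<not> lt t i k"
    using assms unfolding lt_def cyc3_def by (smt (z3) ordf)
  then show ?thesis unfolding sg_def by auto
qed

lemma sg_cross:
  assumes "crosses (i,k) (j,l)"
  shows "sg t i j * sg t l j * sg t l k = (sg t i k :: 'a::ring_1)"
  using cross_parity[OF assms, of t] unfolding sg_def
  by (cases "lt t i j"; cases "lt t l j"; cases "lt t l k"; simp)

lemma crosses_swap2: "crosses (i,k) (j,l) \<Longrightarrow> crosses (i,k) (l,j)"
  unfolding crosses_iff by blast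

lemma sg_tri:
  assumes "i \<noteq> j" "j \<noteq> k" "i \<noteq> k"
  shows "sg t i j * sg t k j * sg t k i = - (sg t i k * sg t j k * (sg t j i :: 'a::ring_1))"
proof -
  have "sg t k j = - (sg t j k :: 'a)" "sg t k i = - (sg t i k :: 'a)" "sg t j i = - (sg t i j :: 'a)"
    using assms sg_anti by metis+
  then show ?thesis unfolding sg_def
    by (cases "lt t i j"; cases "lt t j k"; cases "lt t i k"; simp)
qed

definition Dz :: "'v::linorder \<Rightarrow> ('v \<Rightarrow> 'a::ring_1) \<Rightarrow> 'v \<Rightarrow> 'v \<Rightarrow> 'a" where
  "Dz t z i k = (if i = t \<or> k = t then 1 else z k - z i)"

lemma alg_tri:
  fixes zi zj zk :: "'a::ring_1"
  assumes "runit (zj - zk)"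
  shows "(zj - zi) * rinv (zj - zk) * (zi - zk) = - ((zk - zi) * rinv (zk - zj) * (zi - zj))"
proof -
  define b where "b = zj - zk"
  have zk: "zk = zj - b" unfolding b_def by simp
  have u: "runit b" using assms b_def by simp
  have r: "rinv (zk - zj) = - rinv b" using u unfolding zk by (simp add: rinv_uminus[symmetric])
  show ?thesis unfolding r unfolding b_def[symmetric] zk
    using u by (simp add: algebra_simps)
qed

lemma alg_ex:
  fixes zi zj zk zl :: "'a::ring_1"
  assumes "runit (zj - zl)"
  shows "zk - zi = (zj - zi) * rinv (zj - zl) * (zk - zl) + (zl - zi) * rinv (zl - zj) * (zk - zj)"
proof -
  define d where "d = zj - zl"
  have zj: "zj = zl + d" unfolding d_def by simp
  have u: "runit d" using assms d_def by simp
  have r: "rinv (zl - zj) = - rinv d" using u unfolding zj by (simp add: rinv_uminus[symmetric])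
  show ?thesis unfolding r unfolding d_def[symmetric] zj
    using u by (simp add: algebra_simps)
qed


lemma core3:
  fixes e1 e2 e3 :: "'a::ring_1"
  assumes e: "e1 = 1 \<or> e1 = -1" "e2 = 1 \<or> e2 = -1" "e3 = 1 \<or> e3 = -1"
    and u: "runit lk" "runit mj" "runit d2"
  shows "(e1 * (li * d1 * mj)) * rinv (e2 * (lk * d2 * mj)) * (e3 * (lk * d3 * mi))
       = (e1 * e2 * e3) * (li * (d1 * rinv d2 * d3) * mi)"
proof -
  have r: "rinv (lk * d2 * mj) = rinv mj * rinv d2 * rinv lk"
    using u by (simp add: rinv_mult mult.assoc)
  have "(li * d1 * mj) * rinv (lk * d2 * mj) * (lk * d3 * mi) = li * (d1 * rinv d2 * d3) * mi"
    unfolding r using u by (simp add: mult.assoc)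
  then show ?thesis using e u
    by (elim disjE; simp add: rinv_uminus mult.assoc)
qed

lemma neg_neg_helper:
  fixes a b :: "'a::ring_1"
  shows "a = s1 * (l * x * m) \<Longrightarrow> b = s2 * (l * y * m) \<Longrightarrow> s1 = - s2 \<Longrightarrow> x = - y \<Longrightarrow> a = b"
  by simp

lemma rep_frieze:
  fixes c :: "'v::linorder \<times> 'v \<Rightarrow> 'a::ring_1"
  assumes tQ: "t \<in> Q"
    and lam: "\<forall>i\<in>Q. runit (lam i)" and mu: "\<forall>i\<in>Q. runit (mu i)"
    and rep: "\<forall>i\<in>Q. \<forall>k\<in>Q. i \<noteq> k \<longrightarrow> c (i,k) = sg t i k * (lam i * Dz t z i k * mu k)"
    and un: "\<forall>i\<in>Q. \<forall>k\<in>Q. i \<noteq> k \<longrightarrow> runit (c (i,k))"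
  shows "frieze Q c"
proof -
  have Du: "runit (Dz t z i k)" if "i \<in> Q" "k \<in> Q" "i \<noteq> k" for i k
  proof -
    have "sg t i k * c (i,k) = lam i * Dz t z i k * mu k"
      using rep that by (simp add: mult.assoc[symmetric])
    moreover have "runit (sg t i k * c (i,k))"
    proof -
      have "sg t i k = (1::'a) \<or> sg t i k = (-1::'a)" by (rule sg_cases)
      then show ?thesis using un that by auto
    qed
    ultimately have "runit (lam i * Dz t z i k * mu k)" by simp
    then have "runit (lam i * Dz t z i k)" using mu that runit_factor_left by blast
    then show ?thesis using lam that runit_factor_right by blast
  qed
  have Dtri: "Dz t z i j * rinv (Dz t z k j) * Dz t z k i = - (Dz t z i k * rinv (Dz t z j k) * Dz t z j i)"
    if "i \<in> Q" "j \<in> Q" "k \<in> Q" "i \<noteq> j" "j \<noteq> k" "i \<noteq> k" for i j k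
  proof -
    have u: "runit (Dz t z k j)" "runit (Dz t z j k)" using Du that by auto
    consider "i = t" | "j = t" | "k = t" | "i \<noteq> t" "j \<noteq> t" "k \<noteq> t" by blast
    then show ?thesis
    proof cases
      case 1
      then have "runit (z k - z j)" using u that unfolding Dz_def by auto
      then show ?thesis using 1 that unfolding Dz_def
        by (simp add: rinv_uminus[symmetric])
    next
      case 2
      then show ?thesis using that unfolding Dz_def by auto
    next
      case 3
      then show ?thesis using that unfolding Dz_def by auto
    next
      case 4
      then have "runit (z j - z k)" using u that unfolding Dz_def by auto
      then show ?thesis using 4 that alg_tri[of "z j" "z k" "z i"] unfolding Dz_def by simp
    qed
  qed
  have Dex: "Dz t z i k = Dz t z i j * rinv (Dz t z l j) * Dz t z l k + Dz t z i l * rinv (Dz t z j l) * Dz t z j k"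
    if "i \<in> Q" "j \<in> Q" "k \<in> Q" "l \<in> Q" "distinct [i,j,k,l]" for i j k l
  proof -
    have u: "runit (Dz t z l j)" "runit (Dz t z j l)" using Du that by auto
    consider "i = t" | "j = t" | "k = t" | "l = t" | "i \<noteq> t" "j \<noteq> t" "k \<noteq> t" "l \<noteq> t" by blast
    then show ?thesis
    proof cases
      case 1
      then have uu: "runit (z j - z l)" using u that unfolding Dz_def by auto
      have r: "rinv (z l - z j) = - rinv (z j - z l)"
        using uu by (metis minus_diff_eq rinv_uminus)
      have e: "Dz t z i k = 1" "Dz t z i j = 1" "Dz t z i l = 1" "Dz t z l j = z j - z l"
        "Dz t z l k = z k - z l" "Dz t z j l = z l - z j" "Dz t z j k = z k - z j"
        using 1 that unfolding Dz_def by auto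
      have "rinv (z j - z l) * (z k - z l) + rinv (z l - z j) * (z k - z j)
          = rinv (z j - z l) * ((z k - z l) - (z k - z j))" unfolding r by (simp add: algebra_simps)
      also have "\<dots> = 1" using uu by simp
      finally show ?thesis unfolding e by simp
    next
      case 2
      then show ?thesis using that unfolding Dz_def by auto
    next
      case 3
      then have uu: "runit (z j - z l)" using u that unfolding Dz_def by auto
      have r: "rinv (z l - z j) = - rinv (z j - z l)"
        using uu by (metis minus_diff_eq rinv_uminus)
      have e: "Dz t z i k = 1" "Dz t z l k = 1" "Dz t z j k = 1" "Dz t z l j = z j - z l"
        "Dz t z i j = z j - z i" "Dz t z j l = z l - z j" "Dz t z i l = z l - z i"
        using 3 that unfolding Dz_def by auto
      have "(z j - z i) * rinv (z j - z l) + (z l - z i) * rinv (z l - z j)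
          = ((z j - z i) - (z l - z i)) * rinv (z j - z l)" unfolding r by (simp add: algebra_simps)
      also have "\<dots> = 1" using uu by simp
      finally show ?thesis unfolding e by simp
    next
      case 4
      then show ?thesis using that unfolding Dz_def by auto
    next
      case 5
      then have "runit (z j - z l)" using u that unfolding Dz_def by auto
      then show ?thesis using 5 that alg_ex[of "z j" "z l" "z k" "z i"] unfolding Dz_def by simp
    qed
  qed
  show ?thesis
    unfolding frieze_def
  proof (intro conjI ballI impI)
    fix d assume "d \<in> diag Q" then show "runit (c d)" using un unfolding diag_def by auto
  next
    fix i j k assume h: "i \<in> Q" "j \<in> Q" "k \<in> Q" "distinct [i,j,k]"
    have "c (i,j) * rinv (c (k,j)) * c (k,i) = (sg t i j * sg t k j * sg t k i) *
            (lam i * (Dz t z i j * rinv (Dz t z k j) * Dz t z k i) * mu i)"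
    proof -
      have ce: "c (i,j) = sg t i j * (lam i * Dz t z i j * mu j)" "c (k,j) = sg t k j * (lam k * Dz t z k j * mu j)"
        "c (k,i) = sg t k i * (lam k * Dz t z k i * mu i)" using rep h by auto
      show ?thesis unfolding ce using sg_cases lam mu Du h by (intro core3) auto
    qed
    moreover have "c (i,k) * rinv (c (j,k)) * c (j,i) = (sg t i k * sg t j k * sg t j i) *
            (lam i * (Dz t z i k * rinv (Dz t z j k) * Dz t z j i) * mu i)"
    proof -
      have ce: "c (i,k) = sg t i k * (lam i * Dz t z i k * mu k)" "c (j,k) = sg t j k * (lam j * Dz t z j k * mu k)"
        "c (j,i) = sg t j i * (lam j * Dz t z j i * mu i)" using rep h by auto
      show ?thesis unfolding ce using sg_cases lam mu Du h by (intro core3) auto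
    qed
    ultimately show "c (i,j) * rinv (c (k,j)) * c (k,i) = c (i,k) * rinv (c (j,k)) * c (j,i)"
      by (rule neg_neg_helper[OF _ _ sg_tri[of i j k t] Dtri[of i j k]]) (use h in auto)
  next
    fix i j k l assume h: "i \<in> Q" "j \<in> Q" "k \<in> Q" "l \<in> Q" "crosses (i,k) (j,l)"
    have d: "distinct [i,j,k,l]" using h(5) unfolding crosses_def Let_def by simp
    have s1: "sg t i j * sg t l j * sg t l k = (sg t i k :: 'a)" using sg_cross h(5) by blast
    have s2: "sg t i l * sg t j l * sg t j k = (sg t i k :: 'a)" using sg_cross crosses_swap2 h(5) by blast
    have "c (i,j) * rinv (c (l,j)) * c (l,k) = (sg t i j * sg t l j * sg t l k) *
            (lam i * (Dz t z i j * rinv (Dz t z l j) * Dz t z l k) * mu k)"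
    proof -
      have ce: "c (i,j) = sg t i j * (lam i * Dz t z i j * mu j)" "c (l,j) = sg t l j * (lam l * Dz t z l j * mu j)"
        "c (l,k) = sg t l k * (lam l * Dz t z l k * mu k)" using rep h d by auto
      show ?thesis unfolding ce using sg_cases lam mu Du h d by (intro core3) auto
    qed
    moreover have "c (i,l) * rinv (c (j,l)) * c (j,k) = (sg t i l * sg t j l * sg t j k) *
            (lam i * (Dz t z i l * rinv (Dz t z j l) * Dz t z j k) * mu k)"
    proof -
      have ce: "c (i,l) = sg t i l * (lam i * Dz t z i l * mu l)" "c (j,l) = sg t j l * (lam j * Dz t z j l * mu l)"
        "c (j,k) = sg t j k * (lam j * Dz t z j k * mu k)" using rep h d by auto
      show ?thesis unfolding ce using sg_cases lam mu Du h d by (intro core3) auto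
    qed
    ultimately show "c (i,k) = c (i,j) * rinv (c (l,j)) * c (l,k) + c (i,l) * rinv (c (j,l)) * c (j,k)"
    proof -
      assume a1: "c (i,j) * rinv (c (l,j)) * c (l,k) = (sg t i j * sg t l j * sg t l k) *
            (lam i * (Dz t z i j * rinv (Dz t z l j) * Dz t z l k) * mu k)"
        and a2: "c (i,l) * rinv (c (j,l)) * c (j,k) = (sg t i l * sg t j l * sg t j k) *
            (lam i * (Dz t z i l * rinv (Dz t z j l) * Dz t z j k) * mu k)"
      have "c (i,j) * rinv (c (l,j)) * c (l,k) + c (i,l) * rinv (c (j,l)) * c (j,k)
         = sg t i k * (lam i * (Dz t z i j * rinv (Dz t z l j) * Dz t z l k
              + Dz t z i l * rinv (Dz t z j l) * Dz t z j k) * mu k)"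
        unfolding a1 a2 s1 s2 by (simp add: distrib_left distrib_right)
      also have "\<dots> = c (i,k)" using rep h d Dex[of i j k l] by simp
      finally show ?thesis by simp
    qed
  qed
qed


definition lamc :: "('v::linorder \<times> 'v \<Rightarrow> 'a::ring_1) \<Rightarrow> 'v \<Rightarrow> 'v \<Rightarrow> 'v \<Rightarrow> 'a" where
  "lamc c t v i = (if i = t then 1 else c (i,t) * rinv (c (v,t)))"
definition muc :: "('v::linorder \<times> 'v \<Rightarrow> 'a::ring_1) \<Rightarrow> 'v \<Rightarrow> 'v \<Rightarrow> 'v \<Rightarrow> 'a" where
  "muc c t v k = (if k = t then - c (v,t) else c (t,k))"
definition zc :: "('v::linorder \<times> 'v \<Rightarrow> 'a::ring_1) \<Rightarrow> 'v \<Rightarrow> 'v \<Rightarrow> 'v \<Rightarrow> 'a" where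
  "zc c t v k = (if k = v then 0 else sg t v k * c (v,k) * rinv (c (t,k)))"

lemma AL1:
  fixes cit civ ckv ckt cik cvk cvt ctv ctk :: "'a::ring_1"
  assumes u: "runit ckv" "runit cvt" "runit cvk"
    and ex: "cit = civ * rinv ckv * ckt + cik * rinv cvk * cvt"
    and tr: "ckt * rinv cvt * cvk = ckv * rinv ctv * ctk"
  shows "cik = cit * rinv cvt * cvk - civ * rinv ctv * ctk"
proof -
  have "cit * rinv cvt * cvk = civ * rinv ckv * (ckt * rinv cvt * cvk) + cik * rinv cvk * (cvt * rinv cvt) * cvk"
    unfolding ex by (simp add: algebra_simps)
  also have "\<dots> = civ * rinv ctv * ctk + cik"
    unfolding tr using u by (simp add: mult.assoc)
  finally show ?thesis by (simp add: algebra_simps)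
qed

lemma AL2:
  fixes cit civ ckv ckt cik cvk cvt ctv ctk :: "'a::ring_1"
  assumes u: "runit ckt" "runit ctv" "runit ctk"
    and ex: "civ = cik * rinv ctk * ctv + cit * rinv ckt * ckv"
    and tr: "ckt * rinv cvt * cvk = ckv * rinv ctv * ctk"
  shows "cik = civ * rinv ctv * ctk - cit * rinv cvt * cvk"
proof -
  have "civ * rinv ctv * ctk = cik * rinv ctk * (ctv * rinv ctv) * ctk + cit * rinv ckt * (ckv * rinv ctv * ctk)"
    unfolding ex by (simp add: algebra_simps)
  also have "\<dots> = cik + cit * rinv cvt * cvk"
    unfolding tr[symmetric] using u by (simp add: mult.assoc)
  finally show ?thesis by (simp add: algebra_simps)
qed

lemma cyc6:
  assumes "distinct [t,v,i,k::'v::linorder]"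
  shows "(crosses (i,k) (t,v) \<and> ((lt t i k \<and> lt t v k \<and> \<not> lt t v i) \<or> (\<not> lt t i k \<and> \<not> lt t v k \<and> lt t v i))) \<or>
   (crosses (i,t) (v,k) \<and> ((lt t i k \<and> lt t v k \<and> lt t v i) \<or> (\<not> lt t i k \<and> \<not> lt t v k \<and> \<not> lt t v i))) \<or>
   (crosses (i,v) (k,t) \<and> ((\<not> lt t i k \<and> lt t v k \<and> lt t v i) \<or> (lt t i k \<and> \<not> lt t v k \<and> \<not> lt t v i)))"
  using assms unfolding crosses_def cyc3_def cyc4_def Let_def lt_def
  by (smt (z3) ordf fst_conv snd_conv distinct_length_2_or_more distinct_singleton)

lemma canon_t:
  fixes c :: "'v::linorder \<times> 'v \<Rightarrow> 'a::ring_1"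
  assumes "runit (c (v,t))" "i \<noteq> t"
  shows "c (i,t) = sg t i t * (lamc c t v i * Dz t (zc c t v) i t * muc c t v t)"
    and "c (t,i) = sg t t i * (lamc c t v t * Dz t (zc c t v) t i * muc c t v i)"
  using assms unfolding sg_def lt_def lamc_def muc_def Dz_def
  by (auto simp: mult.assoc)

lemma canon_pair:
  fixes c :: "'v::linorder \<times> 'v \<Rightarrow> 'a::ring_1"
  assumes d: "t \<noteq> v" "i \<noteq> k" "i \<noteq> t" "k \<noteq> t"
    and u: "runit (c (v,t))" "runit (c (t,v))" "runit (c (t,i))" "runit (c (t,k))"
       "runit (c (k,t))"
    and ukv: "k \<noteq> v \<Longrightarrow> runit (c (k,v))" "k \<noteq> v \<Longrightarrow> runit (c (v,k))"
    and tri_i: "i \<noteq> v \<Longrightarrow> c (i,t) * rinv (c (v,t)) * c (v,i) = c (i,v) * rinv (c (t,v)) * c (t,i)"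
    and tri_k: "k \<noteq> v \<Longrightarrow> c (k,t) * rinv (c (v,t)) * c (v,k) = c (k,v) * rinv (c (t,v)) * c (t,k)"
    and ex5: "crosses (i,k) (t,v) \<Longrightarrow> c (i,k) = c (i,t) * rinv (c (v,t)) * c (v,k) + c (i,v) * rinv (c (t,v)) * c (t,k)"
    and ex1: "crosses (i,t) (v,k) \<Longrightarrow> c (i,t) = c (i,v) * rinv (c (k,v)) * c (k,t) + c (i,k) * rinv (c (v,k)) * c (v,t)"
    and ex2: "crosses (i,v) (k,t) \<Longrightarrow> c (i,v) = c (i,k) * rinv (c (t,k)) * c (t,v) + c (i,t) * rinv (c (k,t)) * c (k,v)"
  shows "c (i,k) = sg t i k * (lamc c t v i * Dz t (zc c t v) i k * muc c t v k)"
proof -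
  consider "i = v" | "k = v" | "i \<noteq> v" "k \<noteq> v" by blast
  then show ?thesis
  proof cases
    case 1
    then have "k \<noteq> v" using d by auto
    moreover have "sg t v k = (1::'a) \<or> sg t v k = (-1::'a)" by (rule sg_cases)
    ultimately show ?thesis using 1 d u unfolding lamc_def muc_def Dz_def zc_def
      by (elim disjE) (simp_all add: mult.assoc)
  next
    case 2
    then have iv: "i \<noteq> v" using d by auto
    have sv: "sg t v i = - (sg t i v :: 'a)" using sg_anti iv by metis
    have "sg t i k * (lamc c t v i * Dz t (zc c t v) i k * muc c t v k)
        = sg t i v * (c (i,t) * rinv (c (v,t)) * (0 - sg t v i * c (v,i) * rinv (c (t,i))) * c (t,v))"
      using 2 d iv unfolding lamc_def muc_def Dz_def zc_def by simp
    also have "\<dots> = (sg t i v * sg t i v) * (c (i,t) * rinv (c (v,t)) * c (v,i) * rinv (c (t,i)) * c (t,v))"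
      unfolding sv by (simp add: mult.assoc sg_comm[of t i v])
    also have "\<dots> = c (i,v) * rinv (c (t,v)) * (c (t,i) * rinv (c (t,i))) * c (t,v)"
      using tri_i[OF iv] by (simp add: mult.assoc)
    also have "\<dots> = c (i,v)" using u by (simp add: mult.assoc)
    finally show ?thesis using 2 by simp
  next
    case 3
    let ?K = "c (i,t) * rinv (c (v,t)) * c (v,k)"
    let ?L = "c (i,v) * rinv (c (t,v)) * c (t,k)"
    have A: "lamc c t v i * Dz t (zc c t v) i k * muc c t v k = sg t v k * ?K - sg t v i * ?L"
    proof -
      have "lamc c t v i * Dz t (zc c t v) i k * muc c t v k
          = c (i,t) * rinv (c (v,t)) * (sg t v k * c (v,k) * rinv (c (t,k)) - sg t v i * c (v,i) * rinv (c (t,i))) * c (t,k)"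
        using 3 d unfolding lamc_def muc_def Dz_def zc_def by simp
      also have "\<dots> = sg t v k * (c (i,t) * rinv (c (v,t)) * c (v,k) * (rinv (c (t,k)) * c (t,k)))
            - sg t v i * ((c (i,t) * rinv (c (v,t)) * c (v,i)) * rinv (c (t,i)) * c (t,k))"
        by (simp add: algebra_simps sg_comm)
      also have "\<dots> = sg t v k * ?K - sg t v i * (c (i,v) * rinv (c (t,v)) * (c (t,i) * rinv (c (t,i))) * c (t,k))"
        using u tri_i[OF 3(1)] by (simp add: mult.assoc)
      also have "\<dots> = sg t v k * ?K - sg t v i * ?L" using u by (simp add: mult.assoc)
      finally show ?thesis .
    qed
    have dd: "distinct [t,v,i,k]" using d 3 by auto
    from cyc6[OF dd] show ?thesis
    proof (elim disjE conjE)
      assume cr: "crosses (i,k) (t,v)" and s: "lt t i k" "lt t v k" "\<not> lt t v i"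
      show ?thesis unfolding A using ex5[OF cr] s unfolding sg_def by simp
    next
      assume cr: "crosses (i,k) (t,v)" and s: "\<not> lt t i k" "\<not> lt t v k" "lt t v i"
      show ?thesis unfolding A using ex5[OF cr] s unfolding sg_def by simp
    next
      assume cr: "crosses (i,t) (v,k)" and s: "lt t i k" "lt t v k" "lt t v i"
      have "c (i,k) = ?K - ?L" by (rule AL1[OF ukv(1)[OF 3(2)] u(1) ukv(2)[OF 3(2)] ex1[OF cr] tri_k[OF 3(2)]])
      then show ?thesis unfolding A using s unfolding sg_def by simp
    next
      assume cr: "crosses (i,t) (v,k)" and s: "\<not> lt t i k" "\<not> lt t v k" "\<not> lt t v i"
      have "c (i,k) = ?K - ?L" by (rule AL1[OF ukv(1)[OF 3(2)] u(1) ukv(2)[OF 3(2)] ex1[OF cr] tri_k[OF 3(2)]])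
      then show ?thesis unfolding A using s unfolding sg_def by (simp add: algebra_simps)
    next
      assume cr: "crosses (i,v) (k,t)" and s: "\<not> lt t i k" "lt t v k" "lt t v i"
      have "c (i,k) = ?L - ?K" by (rule AL2[OF u(5,2,4) ex2[OF cr] tri_k[OF 3(2)]])
      then show ?thesis unfolding A using s unfolding sg_def by (simp add: algebra_simps)
    next
      assume cr: "crosses (i,v) (k,t)" and s: "lt t i k" "\<not> lt t v k" "\<not> lt t v i"
      have "c (i,k) = ?L - ?K" by (rule AL2[OF u(5,2,4) ex2[OF cr] tri_k[OF 3(2)]])
      then show ?thesis unfolding A using s unfolding sg_def by (simp add: algebra_simps)
    qed
  qed
qed


lemma alg_S1:
  fixes cik cit T cvk civ V ctk cv'k cv't cv'v ct'k ct't ct'v cit' X civ' Y :: "'a::ring_1"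
  assumes "cik = cit*T*cvk + civ*V*ctk" "cv'k = cv't*T*cvk + cv'v*V*ctk" "ct'k = ct't*T*cvk + ct'v*V*ctk"
    "cit = cit'*X*cv't + civ'*Y*ct't" "civ = cit'*X*cv'v + civ'*Y*ct'v"
  shows "cik = cit'*X*cv'k + civ'*Y*ct'k"
  using assms by (simp add: algebra_simps)

lemma alg_S2:
  fixes cik cit T cvk civ V ctk cit' cvt' ctt' civ' cvv' ctv' X cv'k Y ct'k :: "'a::ring_1"
  assumes "cik = cit*T*cvk + civ*V*ctk" "cit' = cit*T*cvt' + civ*V*ctt'" "civ' = cit*T*cvv' + civ*V*ctv'"
    "cvk = cvt'*X*cv'k + cvv'*Y*ct'k" "ctk = ctt'*X*cv'k + ctv'*Y*ct'k"
  shows "cik = cit'*X*cv'k + civ'*Y*ct'k"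
  using assms by (simp add: algebra_simps)

lemma CY1:
  assumes "t \<noteq> v" "t' = t \<or> t' = v \<or> cyc3 t t' v" "v' = t \<or> v' = v \<or> cyc3 t v' v"
    "crosses (i,k) (t',v')" "\<not> ((i = t \<or> i = v \<or> cyc3 t i v) \<and> (k = t \<or> k = v \<or> cyc3 t k v))"
  shows "(cyc3 t i v \<and> cyc3 v k t) \<or> (cyc3 v i t \<and> cyc3 t k v)"
  using assms unfolding crosses_def cyc3_def cyc4_def Let_def
  by (smt (z3) ordf fst_conv snd_conv distinct_length_2_or_more distinct_singleton)

lemma CY2:
  assumes "cyc3 t i v" "cyc3 v k t" "t' = t \<or> t' = v \<or> cyc3 t t' v" "v' = t \<or> v' = v \<or> cyc3 t v' v"
    "crosses (i,k) (t',v')"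
  shows "t = t' \<or> t = v' \<or> crosses (i,t) (t',v')" "v = t' \<or> v = v' \<or> crosses (i,v) (t',v')"
  using assms unfolding crosses_def cyc3_def cyc4_def Let_def
  by (smt (z3) ordf fst_conv snd_conv distinct_length_2_or_more distinct_singleton)+

lemma CY3:
  assumes "cyc3 v i t" "cyc3 t k v" "t' = t \<or> t' = v \<or> cyc3 t t' v" "v' = t \<or> v' = v \<or> cyc3 t v' v"
    "crosses (i,k) (t',v')"
  shows "t = t' \<or> t = v' \<or> crosses (t,k) (t',v')" "v = t' \<or> v = v' \<or> crosses (v,k) (t',v')"
  using assms unfolding crosses_def cyc3_def cyc4_def Let_def
  by (smt (z3) ordf fst_conv snd_conv distinct_length_2_or_more distinct_singleton)+

lemma CY4:
  assumes "crosses (i,k) (t,v) \<or> crosses (i,k) (v,t)"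
  shows "(cyc3 t i v \<and> cyc3 v k t) \<or> (cyc3 v i t \<and> cyc3 t k v)"
  using assms unfolding crosses_def cyc3_def cyc4_def Let_def
  by (smt (z3) ordf fst_conv snd_conv distinct_length_2_or_more distinct_singleton)

lemma CY5:
  assumes "(cyc3 t i v \<and> cyc3 v k t) \<or> (cyc3 v i t \<and> cyc3 t k v)"
  shows "\<not> crosses (i,t) (v,k)" "\<not> crosses (i,v) (k,t)"
  using assms unfolding crosses_def cyc3_def cyc4_def Let_def
  by (smt (z3) ordf fst_conv snd_conv distinct_length_2_or_more distinct_singleton)+

lemma cyc3_split:
  assumes "x \<noteq> t" "x \<noteq> v" "t \<noteq> v"
  shows "cyc3 t x v \<or> cyc3 v x t"
  using assms unfolding cyc3_def by (smt (z3) ordf)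

lemma cyc3_excl: "cyc3 t x v \<Longrightarrow> \<not> cyc3 v x t"
  unfolding cyc3_def by (smt (z3) ordf)

lemma OS:
  fixes c :: "'v::linorder \<times> 'v \<Rightarrow> 'a::ring_1"
  assumes tv: "t \<in> P" "v \<in> P" "t \<noteq> v"
    and P1: "P1 = {x\<in>P. x = t \<or> x = v \<or> cyc3 t x v}"
    and E1: "E1 \<subseteq> diag P1"
    and wf: "weak_frieze P1 E1 c"
    and z: "\<forall>x. c (x,x) = 0"
    and u: "runit (c (t,v))" "runit (c (v,t))"
    and cross: "\<forall>i\<in>P. \<forall>k\<in>P. (cyc3 t i v \<and> cyc3 v k t) \<or> (cyc3 v i t \<and> cyc3 t k v) \<longrightarrow>
        c (i,k) = c (i,t) * rinv (c (v,t)) * c (v,k) + c (i,v) * rinv (c (t,v)) * c (t,k)"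
    and h: "i \<in> P" "k \<in> P" "(t',v') \<in> E1" "(v',t') \<in> E1" "crosses (i,k) (t',v')"
  shows "c (i,k) = c (i,t') * rinv (c (v',t')) * c (v',k) + c (i,v') * rinv (c (t',v')) * c (t',k)"
proof -
  have t'v': "t' \<in> P1" "v' \<in> P1" using E1 h unfolding diag_def by auto
  have ut: "runit (c (t',v'))" "runit (c (v',t'))" using wf h unfolding weak_frieze_def by auto
  have wrel: "c (a,b) = c (a,t') * rinv (c (v',t')) * c (v',b) + c (a,v') * rinv (c (t',v')) * c (t',b)"
    if "a \<in> P1" "b \<in> P1" "crosses (a,b) (t',v')" for a b
    using wf that h unfolding weak_frieze_def by blast
  have P1P: "P1 \<subseteq> P" using P1 by auto
  have tP1: "t \<in> P1" "v \<in> P1" using P1 tv by auto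
  show ?thesis
  proof (cases "i \<in> P1 \<and> k \<in> P1")
    case True
    then show ?thesis using wrel h by blast
  next
    case False
    have ar: "t' = t \<or> t' = v \<or> cyc3 t t' v" "v' = t \<or> v' = v \<or> cyc3 t v' v" using t'v' P1 by auto
    have notb: "\<not> ((i = t \<or> i = v \<or> cyc3 t i v) \<and> (k = t \<or> k = v \<or> cyc3 t k v))"
      using False P1 h by auto
    have XF: "c (x,b) = c (x,t) * rinv (c (v,t)) * c (v,b) + c (x,v) * rinv (c (t,v)) * c (t,b)"
      if "x \<in> P1" "b \<in> P" "cyc3 v b t" for x b
    proof -
      have "x = t \<or> x = v \<or> cyc3 t x v" using that P1 by auto
      then show ?thesis
      proof (elim disjE)
        assume "x = t" then show ?thesis using z u by (simp add: mult.assoc)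
      next
        assume "x = v" then show ?thesis using z u by (simp add: mult.assoc)
      next
        assume "cyc3 t x v" then show ?thesis using cross that P1P by blast
      qed
    qed
    have XF': "c (b,x) = c (b,t) * rinv (c (v,t)) * c (v,x) + c (b,v) * rinv (c (t,v)) * c (t,x)"
      if "x \<in> P1" "b \<in> P" "cyc3 v b t" for x b
    proof -
      have "x = t \<or> x = v \<or> cyc3 t x v" using that P1 by auto
      then show ?thesis
      proof (elim disjE)
        assume "x = t" then show ?thesis using z u by (simp add: mult.assoc)
      next
        assume "x = v" then show ?thesis using z u by (simp add: mult.assoc)
      next
        assume "cyc3 t x v" then show ?thesis using cross that P1P by blast
      qed
    qed
    have TR: "c (a,b) = c (a,t') * rinv (c (v',t')) * c (v',b) + c (a,v') * rinv (c (t',v')) * c (t',b)"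
      if "a \<in> P1" "b \<in> P1" "b = t' \<or> b = v' \<or> crosses (a,b) (t',v')" "a \<noteq> t'" "a \<noteq> v'" for a b
      using that(3)
    proof (elim disjE)
      assume "b = t'" then show ?thesis using z ut by (simp add: mult.assoc)
    next
      assume "b = v'" then show ?thesis using z ut by (simp add: mult.assoc)
    next
      assume "crosses (a,b) (t',v')" then show ?thesis using wrel that by blast
    qed
    have TR': "c (a,b) = c (a,t') * rinv (c (v',t')) * c (v',b) + c (a,v') * rinv (c (t',v')) * c (t',b)"
      if "a \<in> P1" "b \<in> P1" "a = t' \<or> a = v' \<or> crosses (a,b) (t',v')" "b \<noteq> t'" "b \<noteq> v'" for a b
      using that(3)
    proof (elim disjE)
      assume "a = t'" then show ?thesis using z ut by (simp add: mult.assoc)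
    next
      assume "a = v'" then show ?thesis using z ut by (simp add: mult.assoc)
    next
      assume "crosses (a,b) (t',v')" then show ?thesis using wrel that by blast
    qed
    have dist: "i \<noteq> t'" "i \<noteq> v'" "k \<noteq> t'" "k \<noteq> v'" using h(5) unfolding crosses_def Let_def by auto
    from CY1[OF tv(3) ar h(5) notb] show ?thesis
    proof (elim disjE conjE)
      assume a: "cyc3 t i v" "cyc3 v k t"
      have iP1: "i \<in> P1" using a P1 h by auto
      show ?thesis
      proof (rule alg_S1)
        show "c (i,k) = c (i,t) * rinv (c (v,t)) * c (v,k) + c (i,v) * rinv (c (t,v)) * c (t,k)"
          using cross a h by blast
        show "c (v',k) = c (v',t) * rinv (c (v,t)) * c (v,k) + c (v',v) * rinv (c (t,v)) * c (t,k)"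
          using XF t'v' h a by blast
        show "c (t',k) = c (t',t) * rinv (c (v,t)) * c (v,k) + c (t',v) * rinv (c (t,v)) * c (t,k)"
          using XF t'v' h a by blast
        show "c (i,t) = c (i,t') * rinv (c (v',t')) * c (v',t) + c (i,v') * rinv (c (t',v')) * c (t',t)"
          using TR[OF iP1 tP1(1)] CY2(1)[OF a ar h(5)] dist by blast
        show "c (i,v) = c (i,t') * rinv (c (v',t')) * c (v',v) + c (i,v') * rinv (c (t',v')) * c (t',v)"
          using TR[OF iP1 tP1(2)] CY2(2)[OF a ar h(5)] dist by blast
      qed
    next
      assume a: "cyc3 v i t" "cyc3 t k v"
      have kP1: "k \<in> P1" using a P1 h by auto
      show ?thesis
      proof (rule alg_S2)
        show "c (i,k) = c (i,t) * rinv (c (v,t)) * c (v,k) + c (i,v) * rinv (c (t,v)) * c (t,k)"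
          using cross a h by blast
        show "c (i,t') = c (i,t) * rinv (c (v,t)) * c (v,t') + c (i,v) * rinv (c (t,v)) * c (t,t')"
          using XF' t'v' h a by blast
        show "c (i,v') = c (i,t) * rinv (c (v,t)) * c (v,v') + c (i,v) * rinv (c (t,v)) * c (t,v')"
          using XF' t'v' h a by blast
        show "c (v,k) = c (v,t') * rinv (c (v',t')) * c (v',k) + c (v,v') * rinv (c (t',v')) * c (t',k)"
          using TR'[OF tP1(2) kP1] CY3(2)[OF a ar h(5)] dist by blast
        show "c (t,k) = c (t,t') * rinv (c (v',t')) * c (v',k) + c (t,v') * rinv (c (t',v')) * c (t',k)"
          using TR'[OF tP1(1) kP1] CY3(1)[OF a ar h(5)] dist by blast
      qed
    qed
  qed
qed


lemma frieze_tri: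
  "frieze X c \<Longrightarrow> i \<in> X \<Longrightarrow> j \<in> X \<Longrightarrow> k \<in> X \<Longrightarrow> distinct [i,j,k] \<Longrightarrow>
   c (i,j) * rinv (c (k,j)) * c (k,i) = c (i,k) * rinv (c (j,k)) * c (j,i)"
  unfolding frieze_def by blast

lemma frieze_ex:
  "frieze X c \<Longrightarrow> i \<in> X \<Longrightarrow> j \<in> X \<Longrightarrow> k \<in> X \<Longrightarrow> l \<in> X \<Longrightarrow> crosses (i,k) (j,l) \<Longrightarrow>
   c (i,k) = c (i,j) * rinv (c (l,j)) * c (l,k) + c (i,l) * rinv (c (j,l)) * c (j,k)"
  unfolding frieze_def by blast

lemma frieze_unit:
  "frieze X c \<Longrightarrow> i \<in> X \<Longrightarrow> k \<in> X \<Longrightarrow> i \<noteq> k \<Longrightarrow> runit (c (i,k))"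
  unfolding frieze_def diag_def by blast

lemma WG:
  fixes c :: "'v::linorder \<times> 'v \<Rightarrow> 'a::ring_1"
  assumes tv: "t \<in> P" "v \<in> P" "t \<noteq> v"
    and P1: "P1 = {x\<in>P. x = t \<or> x = v \<or> cyc3 t x v}"
    and P2: "P2 = {x\<in>P. x = v \<or> x = t \<or> cyc3 v x t}"
    and E1: "E1 = E \<inter> diag P1 - {(t,v),(v,t)}"
    and E2: "E2 = E \<inter> diag P2 - {(v,t),(t,v)}"
    and Es: "E \<subseteq> diag P1 \<union> diag P2" "(t,v) \<in> E" "(v,t) \<in> E"
    and wf1: "weak_frieze P1 E1 c" and wf2: "weak_frieze P2 E2 c"
    and z: "\<forall>x. c (x,x) = 0"
    and u: "runit (c (t,v))" "runit (c (v,t))"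
    and cross: "\<forall>i\<in>P. \<forall>k\<in>P. (cyc3 t i v \<and> cyc3 v k t) \<or> (cyc3 v i t \<and> cyc3 t k v) \<longrightarrow>
        c (i,k) = c (i,t) * rinv (c (v,t)) * c (v,k) + c (i,v) * rinv (c (t,v)) * c (t,k)"
  shows "weak_frieze P E c"
proof -
  have cross': "\<forall>i\<in>P. \<forall>k\<in>P. (cyc3 v i t \<and> cyc3 t k v) \<or> (cyc3 t i v \<and> cyc3 v k t) \<longrightarrow>
        c (i,k) = c (i,v) * rinv (c (t,v)) * c (t,k) + c (i,t) * rinv (c (v,t)) * c (v,k)"
    using cross by (simp add: add.commute disj_commute)
  have E1d: "E1 \<subseteq> diag P1" "E2 \<subseteq> diag P2" using E1 E2 by auto
  show ?thesis unfolding weak_frieze_def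
  proof (intro conjI ballI allI impI)
    fix d assume "d \<in> E"
    then consider "d \<in> E1" | "d \<in> E2" | "d = (t,v)" | "d = (v,t)" using E1 E2 Es by auto
    then show "runit (c d)"
      using wf1 wf2 u unfolding weak_frieze_def by cases auto
  next
    fix i k t' v'
    assume i: "i \<in> P" and k: "k \<in> P" and h: "(t',v') \<in> E \<and> (v',t') \<in> E \<and> crosses (i,k) (t',v')"
    show "c (i,k) = c (i,t') * rinv (c (v',t')) * c (v',k) + c (i,v') * rinv (c (t',v')) * c (t',k)"
    proof (cases "(t',v') = (t,v) \<or> (t',v') = (v,t)")
      case True
      then have "(cyc3 t i v \<and> cyc3 v k t) \<or> (cyc3 v i t \<and> cyc3 t k v)" using CY4[of i k t v] h by auto
      then show ?thesis using True cross cross' i k by auto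
    next
      case False
      have sym: "(v',t') \<in> diag X" if "(t',v') \<in> diag X" for X using that unfolding diag_def by auto
      show ?thesis
      proof (cases "(t',v') \<in> diag P1")
        case True
        then have "(t',v') \<in> E1" "(v',t') \<in> E1" using E1 h False sym by auto
        then show ?thesis using OS[OF tv P1 E1d(1) wf1 z u cross i k] h by blast
      next
        case F2: False
        then have "(t',v') \<in> diag P2" using Es h by auto
        then have "(t',v') \<in> E2" "(v',t') \<in> E2" using E2 h False sym by auto
        then show ?thesis using OS[OF tv(2,1) tv(3)[symmetric] P2 E1d(2) wf2 z u(2,1) cross' i k] h by blast
      qed
    qed
  qed
qed

lemma FG:
  fixes c :: "'v::linorder \<times> 'v \<Rightarrow> 'a::ring_1"
  assumes tv: "t \<in> P" "v \<in> P" "t \<noteq> v"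
    and P1: "P1 = {x\<in>P. x = t \<or> x = v \<or> cyc3 t x v}"
    and P2: "P2 = {x\<in>P. x = v \<or> x = t \<or> cyc3 v x t}"
    and fr1: "frieze P1 c" and fr2: "frieze P2 c"
    and un: "\<forall>d\<in>diag P. runit (c d)"
    and cross: "\<forall>i\<in>P. \<forall>k\<in>P. (cyc3 t i v \<and> cyc3 v k t) \<or> (cyc3 v i t \<and> cyc3 t k v) \<longrightarrow>
        c (i,k) = c (i,t) * rinv (c (v,t)) * c (v,k) + c (i,v) * rinv (c (t,v)) * c (t,k)"
  shows "frieze P c"
proof (rule rep_frieze[where t = t and lam = "lamc c t v" and mu = "muc c t v" and z = "zc c t v"])
  show "t \<in> P" by (rule tv)
  have U: "runit (c (a,b))" if "a \<in> P" "b \<in> P" "a \<noteq> b" for a b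
    using un that unfolding diag_def by auto
  show "\<forall>i\<in>P. runit (lamc c t v i)" using U tv unfolding lamc_def by auto
  show "\<forall>i\<in>P. runit (muc c t v i)" using U tv unfolding muc_def by auto
  show "\<forall>i\<in>P. \<forall>k\<in>P. i \<noteq> k \<longrightarrow> runit (c (i,k))" using U by auto
  show "\<forall>i\<in>P. \<forall>k\<in>P. i \<noteq> k \<longrightarrow> c (i,k) = sg t i k * (lamc c t v i * Dz t (zc c t v) i k * muc c t v k)"
  proof (intro ballI impI)
    fix i k assume i: "i \<in> P" and k: "k \<in> P" and ik: "i \<noteq> k"
    have uvt: "runit (c (v,t))" using U tv by auto
    show "c (i,k) = sg t i k * (lamc c t v i * Dz t (zc c t v) i k * muc c t v k)"
    proof (cases "i = t")
      case True then show ?thesis using canon_t(2)[where c=c and v=v and t=t and i=k] uvt ik by simp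
    next
      case it: False
      show ?thesis
      proof (cases "k = t")
        case True then show ?thesis using canon_t(1)[where c=c and v=v and t=t and i=i] uvt it by simp
      next
        case kt: False
        have HX: "c (i,k) = sg t i k * (lamc c t v i * Dz t (zc c t v) i k * muc c t v k)"
          if X: "frieze X c" "t \<in> X" "v \<in> X" "i \<in> X" "k \<in> X" for X
        proof (rule canon_pair)
          show "t \<noteq> v" "i \<noteq> k" "i \<noteq> t" "k \<noteq> t" using tv ik it kt by auto
          show "runit (c (v,t))" "runit (c (t,v))" "runit (c (t,i))" "runit (c (t,k))"
            "runit (c (k,t))"
            using U i k tv ik it kt by (auto intro!: U)
          show "k \<noteq> v \<Longrightarrow> runit (c (k,v))" "k \<noteq> v \<Longrightarrow> runit (c (v,k))"
            using U k tv by auto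
          show "i \<noteq> v \<Longrightarrow> c (i,t) * rinv (c (v,t)) * c (v,i) = c (i,v) * rinv (c (t,v)) * c (t,i)"
            using frieze_tri[OF X(1,4,2,3)] tv it by auto
          show "k \<noteq> v \<Longrightarrow> c (k,t) * rinv (c (v,t)) * c (v,k) = c (k,v) * rinv (c (t,v)) * c (t,k)"
            using frieze_tri[OF X(1,5,2,3)] tv kt by auto
          show "crosses (i,k) (t,v) \<Longrightarrow> c (i,k) = c (i,t) * rinv (c (v,t)) * c (v,k) + c (i,v) * rinv (c (t,v)) * c (t,k)"
            using frieze_ex[OF X(1,4,2,5,3)] by blast
          show "crosses (i,t) (v,k) \<Longrightarrow> c (i,t) = c (i,v) * rinv (c (k,v)) * c (k,t) + c (i,k) * rinv (c (v,k)) * c (v,t)"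
            using frieze_ex[OF X(1,4,3,2,5)] by blast
          show "crosses (i,v) (k,t) \<Longrightarrow> c (i,v) = c (i,k) * rinv (c (t,k)) * c (t,v) + c (i,t) * rinv (c (k,t)) * c (k,v)"
            using frieze_ex[OF X(1,4,5,3,2)] by blast
        qed
        have tP: "t \<in> P1" "v \<in> P1" "t \<in> P2" "v \<in> P2" using P1 P2 tv by auto
        show ?thesis
        proof (cases "i \<in> P1 \<and> k \<in> P1")
          case True then show ?thesis using HX[OF fr1 tP(1,2)] by blast
        next
          case n1: False
          show ?thesis
          proof (cases "i \<in> P2 \<and> k \<in> P2")
            case True then show ?thesis using HX[OF fr2 tP(3,4)] by blast
          next
            case n2: False
            have sp: "x = t \<or> x = v \<or> cyc3 t x v \<or> cyc3 v x t" for x using cyc3_split[of x t v] tv by blast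
            have cr: "(cyc3 t i v \<and> cyc3 v k t) \<or> (cyc3 v i t \<and> cyc3 t k v)"
              using n1 n2 i k P1 P2 sp[of i] sp[of k] by auto
            have mem: "(i \<in> P1 \<and> k \<in> P2) \<or> (i \<in> P2 \<and> k \<in> P1)" using cr P1 P2 i k by auto
            have Fi: "frieze Xi c \<and> t \<in> Xi \<and> v \<in> Xi \<and> i \<in> Xi" if "Xi = (if i \<in> P1 then P1 else P2)" for Xi
              using that fr1 fr2 tP mem by auto
            have Fk: "frieze Xk c \<and> t \<in> Xk \<and> v \<in> Xk \<and> k \<in> Xk" if "Xk = (if k \<in> P1 then P1 else P2)" for Xk
              using that fr1 fr2 tP mem by auto
            obtain Xi where Xi: "frieze Xi c" "t \<in> Xi" "v \<in> Xi" "i \<in> Xi" using Fi by blast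
            obtain Xk where Xk: "frieze Xk c" "t \<in> Xk" "v \<in> Xk" "k \<in> Xk" using Fk by blast
            show ?thesis
            proof (rule canon_pair)
              show "t \<noteq> v" "i \<noteq> k" "i \<noteq> t" "k \<noteq> t" using tv ik it kt by auto
              show "runit (c (v,t))" "runit (c (t,v))" "runit (c (t,i))" "runit (c (t,k))"
                "runit (c (k,t))"
                using i k tv ik it kt by (auto intro!: U)
              show "k \<noteq> v \<Longrightarrow> runit (c (k,v))" "k \<noteq> v \<Longrightarrow> runit (c (v,k))"
                using U k tv by auto
              show "i \<noteq> v \<Longrightarrow> c (i,t) * rinv (c (v,t)) * c (v,i) = c (i,v) * rinv (c (t,v)) * c (t,i)"
                using frieze_tri[OF Xi(1,4,2,3)] tv it by auto
              show "k \<noteq> v \<Longrightarrow> c (k,t) * rinv (c (v,t)) * c (v,k) = c (k,v) * rinv (c (t,v)) * c (t,k)"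
                using frieze_tri[OF Xk(1,4,2,3)] tv kt by auto
              show "crosses (i,k) (t,v) \<Longrightarrow> c (i,k) = c (i,t) * rinv (c (v,t)) * c (v,k) + c (i,v) * rinv (c (t,v)) * c (t,k)"
                using cross cr i k by blast
              show "crosses (i,t) (v,k) \<Longrightarrow> c (i,t) = c (i,v) * rinv (c (k,v)) * c (k,t) + c (i,k) * rinv (c (v,k)) * c (v,t)"
                using CY5(1)[OF cr] by blast
              show "crosses (i,v) (k,t) \<Longrightarrow> c (i,v) = c (i,k) * rinv (c (t,k)) * c (t,v) + c (i,t) * rinv (c (k,t)) * c (k,v)"
                using CY5(2)[OF cr] by blast
            qed
          qed
        qed
      qed
    qed
  qed
qed


lemma gap:
  fixes Q :: "'v::linorder set"
  assumes "finite Q" "x \<notin> Q" "2 \<le> card Q"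
  shows "\<exists>a b. a \<in> Q \<and> b \<in> Q \<and> a \<noteq> b \<and> cyc3 a x b \<and> (\<forall>y\<in>Q. \<not> cyc3 a y b)"
proof -
  have ne: "Q \<noteq> {}" using assms by auto
  have two: "Min Q < Max Q"
  proof -
    have "card (Q - {Min Q}) = card Q - 1" using assms(1) ne by (simp add: card_Diff_singleton)
    then have "card (Q - {Min Q}) \<noteq> 0" using assms(3) by simp
    then have "Q - {Min Q} \<noteq> {}" by (metis card.empty)
    then obtain q where q: "q \<in> Q" "q \<noteq> Min Q" by blast
    have "Min Q \<le> q" "q \<le> Max Q" using assms(1) q by auto
    then show ?thesis using q by auto
  qed
  define Hi where "Hi = {y\<in>Q. x < y}"
  define Lo where "Lo = {y\<in>Q. y < x}"
  have fH: "finite Hi" "finite Lo" using assms(1) Hi_def Lo_def by auto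
  have QHL: "Q = Hi \<union> Lo" using assms(2) Hi_def Lo_def by (auto simp: neq_iff)
  consider "Hi \<noteq> {}" "Lo \<noteq> {}" | "Hi = {}" | "Lo = {}" by blast
  then show ?thesis
  proof cases
    case 1
    define a where "a = Max Lo"
    define b where "b = Min Hi"
    have aL: "a \<in> Lo" unfolding a_def using 1 fH by (intro Max_in) auto
    have bH: "b \<in> Hi" unfolding b_def using 1 fH by (intro Min_in) auto
    have a: "a \<in> Q" "a < x" "\<forall>y\<in>Lo. y \<le> a" using aL fH unfolding a_def Lo_def by auto
    have b: "b \<in> Q" "x < b" "\<forall>y\<in>Hi. b \<le> y" using bH fH unfolding b_def Hi_def by auto
    have "\<forall>y\<in>Q. \<not> cyc3 a y b"
    proof
      fix y assume "y \<in> Q"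
      then have "y \<le> a \<or> b \<le> y" using a b QHL by auto
      then show "\<not> cyc3 a y b" using a b unfolding cyc3_def by auto
    qed
    moreover have "cyc3 a x b" using a b unfolding cyc3_def by auto
    ultimately show ?thesis using a b by (intro exI[of _ a] exI[of _ b]) auto
  next
    case 2
    then have all: "\<forall>y\<in>Q. y < x" using QHL Lo_def by auto
    have "\<forall>y\<in>Q. \<not> cyc3 (Max Q) y (Min Q)"
      using assms(1) ne unfolding cyc3_def by (auto simp: not_less)
    moreover have "cyc3 (Max Q) x (Min Q)" using all two assms(1) ne unfolding cyc3_def by auto
    ultimately show ?thesis using two assms(1) ne by (intro exI[of _ "Max Q"] exI[of _ "Min Q"]) auto
  next
    case 3
    then have all: "\<forall>y\<in>Q. x < y" using QHL Hi_def by auto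
    have "\<forall>y\<in>Q. \<not> cyc3 (Max Q) y (Min Q)"
      using assms(1) ne unfolding cyc3_def by (auto simp: not_less)
    moreover have "cyc3 (Max Q) x (Min Q)" using all two assms(1) ne unfolding cyc3_def by auto
    ultimately show ?thesis using two assms(1) ne by (intro exI[of _ "Max Q"] exI[of _ "Min Q"]) auto
  qed
qed

lemma edge_of_gap:
  "a \<in> Q \<Longrightarrow> b \<in> Q \<Longrightarrow> a \<noteq> b \<Longrightarrow> (\<forall>y\<in>Q. \<not> cyc3 a y b) \<Longrightarrow> is_edge Q (a,b)"
  unfolding is_edge_def diag_def by auto

lemma edge_sub:
  "is_edge P d \<Longrightarrow> Q \<subseteq> P \<Longrightarrow> d \<in> diag Q \<Longrightarrow> is_edge Q d"
  unfolding is_edge_def by blast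

lemma piece_empty:
  assumes "polygon P" "piece P {} Q"
  shows "Q = P"
proof (rule ccontr)
  assume "Q \<noteq> P"
  have QP: "Q \<subseteq> P" and c3: "3 \<le> card Q" using assms unfolding piece_def by auto
  then obtain x where x: "x \<in> P" "x \<notin> Q" using \<open>Q \<noteq> P\<close> by blast
  have fQ: "finite Q" using assms(1) QP unfolding polygon_def by (auto intro: finite_subset)
  obtain a b where ab: "a \<in> Q" "b \<in> Q" "a \<noteq> b" "cyc3 a x b" "\<forall>y\<in>Q. \<not> cyc3 a y b"
    using gap[OF fQ x(2)] c3 by auto
  have "is_edge Q (a,b)" using edge_of_gap ab by auto
  then have e: "is_edge P (a,b)" using assms(2) unfolding piece_def by auto
  obtain z where z: "z \<in> Q" "z \<noteq> a" "z \<noteq> b"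
  proof -
    have "\<not> Q \<subseteq> {a,b}"
    proof
      assume "Q \<subseteq> {a,b}"
      then have "card Q \<le> card {a,b}" by (intro card_mono) auto
      also have "\<dots> \<le> 2" by (simp add: card_insert_le_m1)
      finally show False using c3 by simp
    qed
    then show ?thesis using that by blast
  qed
  have "cyc3 b z a" using z ab(5) cyc3_total[of a z b] ab(3) cyc3_rot by metis
  then show False using e x ab(4) z QP unfolding is_edge_def by auto
qed

lemma piece_self:
  assumes "polygon P" shows "piece P {} P"
  using assms unfolding piece_def polygon_def by auto


lemma SM1:
  assumes "a = t \<or> a = v \<or> cyc3 t a v" "b = t \<or> b = v \<or> cyc3 t b v" "a \<noteq> b" "t \<noteq> v"
    "cyc3 a x b" "cyc3 v x t"
  shows "(a = v \<and> b = t) \<or> cyc3 a t b \<or> cyc3 a v b"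
  using assms unfolding cyc3_def by (smt (z3) ordf)

lemma SM2:
  assumes "cyc3 a t b" "\<not> cyc3 a x b" "\<not> cyc3 a y b" "cyc3 v x t" "cyc3 t y v"
  shows "cyc3 b v a"
  using assms unfolding cyc3_def by (smt (z3) ordf)

lemma SM3:
  assumes "a \<noteq> b" "t \<noteq> v" "\<not> cyc3 a t b" "\<not> cyc3 a v b"
  shows "((a = t \<or> a = v \<or> cyc3 t a v) \<and> (b = t \<or> b = v \<or> cyc3 t b v)) \<or>
         ((a = v \<or> a = t \<or> cyc3 v a t) \<and> (b = v \<or> b = t \<or> cyc3 v b t))"
  using assms unfolding cyc3_def by (smt (z3) ordf)

lemma SM4:
  assumes "a \<noteq> b" "t \<noteq> v" "\<not> crosses (a,b) (t,v)"
  shows "((a = t \<or> a = v \<or> cyc3 t a v) \<and> (b = t \<or> b = v \<or> cyc3 t b v)) \<or>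
         ((a = v \<or> a = t \<or> cyc3 v a t) \<and> (b = v \<or> b = t \<or> cyc3 v b t))"
  using assms unfolding crosses_def cyc3_def cyc4_def Let_def
  by (smt (z3) ordf fst_conv snd_conv distinct_length_2_or_more distinct_singleton)

lemma CY6:
  assumes "(cyc3 t i v \<and> cyc3 v k t) \<or> (cyc3 v i t \<and> cyc3 t k v)"
  shows "crosses (i,k) (t,v)"
  using assms unfolding crosses_def cyc3_def cyc4_def Let_def
  by (smt (z3) ordf fst_conv snd_conv distinct_length_2_or_more distinct_singleton)

lemma tv_facts:
  assumes "dissection P E" "(t,v) \<in> E"
  shows "t \<in> P" "v \<in> P" "t \<noteq> v" "\<exists>x\<in>P. cyc3 t x v" "\<exists>y\<in>P. cyc3 v y t" "(v,t) \<in> E"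
proof -
  have "internal P (t,v)" using assms unfolding dissection_def by auto
  then have d: "(t,v) \<in> diag P" and ne: "\<not> is_edge P (t,v)" unfolding internal_def by auto
  show "t \<in> P" "v \<in> P" "t \<noteq> v" using d unfolding diag_def by auto
  show "\<exists>x\<in>P. cyc3 t x v" "\<exists>y\<in>P. cyc3 v y t" using d ne unfolding is_edge_def by auto
  show "(v,t) \<in> E" using assms unfolding dissection_def by auto
qed

lemma polygon_P1:
  assumes pol: "polygon P" and dis: "dissection P E" and tvE: "(t,v) \<in> E"
    and P1: "P1 = {x\<in>P. x = t \<or> x = v \<or> cyc3 t x v}"
  shows "polygon P1"
proof -
  obtain x where x: "x \<in> P" "cyc3 t x v" using tv_facts[OF dis tvE] by blast
  have sub: "{t,x,v} \<subseteq> P1" using x P1 tv_facts[OF dis tvE] by auto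
  have fin: "finite P1" using pol P1 unfolding polygon_def by auto
  have "card {t,x,v} = 3" using x(2) cyc3_dist tv_facts(3)[OF dis tvE] by fastforce
  then have "3 \<le> card P1" using card_mono[OF fin sub] by simp
  then show ?thesis using fin unfolding polygon_def by simp
qed

lemma EP1:
  assumes tv: "t \<in> P" "v \<in> P" "t \<noteq> v"
    and P1: "P1 = {x\<in>P. x = t \<or> x = v \<or> cyc3 t x v}"
    and e: "is_edge P1 (a,b)"
  shows "is_edge P (a,b) \<or> (a,b) = (t,v) \<or> (a,b) = (v,t)"
proof -
  have ab: "a \<in> P1" "b \<in> P1" "a \<noteq> b" using e unfolding is_edge_def diag_def by auto
  have abP: "(a,b) \<in> diag P" using ab P1 unfolding diag_def by auto
  have arc: "a = t \<or> a = v \<or> cyc3 t a v" "b = t \<or> b = v \<or> cyc3 t b v" using ab P1 by auto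
  have tP1: "t \<in> P1" "v \<in> P1" using tv P1 by auto
  have out: "cyc3 v x t" if "x \<in> P" "x \<notin> P1" for x
    using that P1 cyc3_split[of x t v] tv by auto
  from e have "(\<not> (\<exists>x\<in>P1. cyc3 a x b)) \<or> (\<not> (\<exists>x\<in>P1. cyc3 b x a))"
    unfolding is_edge_def by simp
  then show ?thesis
  proof
    assume n: "\<not> (\<exists>x\<in>P1. cyc3 a x b)"
    show ?thesis
    proof (cases "\<exists>x\<in>P. cyc3 a x b")
      case True
      then obtain x where x: "x \<in> P" "cyc3 a x b" by blast
      then have "x \<notin> P1" using n by auto
      then have "cyc3 v x t" using out x by auto
      then have "(a = v \<and> b = t) \<or> cyc3 a t b \<or> cyc3 a v b" using SM1 arc ab(3) tv(3) x(2) by blast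
      then show ?thesis using n tP1 by auto
    next
      case False
      then show ?thesis using abP unfolding is_edge_def by auto
    qed
  next
    assume n: "\<not> (\<exists>x\<in>P1. cyc3 b x a)"
    show ?thesis
    proof (cases "\<exists>x\<in>P. cyc3 b x a")
      case True
      then obtain x where x: "x \<in> P" "cyc3 b x a" by blast
      then have "x \<notin> P1" using n by auto
      then have "cyc3 v x t" using out x by auto
      then have "(b = v \<and> a = t) \<or> cyc3 b t a \<or> cyc3 b v a" using SM1 arc ab(3) tv(3) x(2) by blast
      then show ?thesis using n tP1 by auto
    next
      case False
      then show ?thesis using abP unfolding is_edge_def by auto
    qed
  qed
qed

lemma dissection_P1:
  assumes dis: "dissection P E" and tvE: "(t,v) \<in> E"
    and P1: "P1 = {x\<in>P. x = t \<or> x = v \<or> cyc3 t x v}"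
    and E1: "E1 = E \<inter> diag P1 - {(t,v),(v,t)}"
  shows "dissection P1 E1"
  unfolding dissection_def
proof (intro conjI ballI)
  note tv = tv_facts[OF dis tvE]
  fix d assume d: "d \<in> E1"
  obtain a b where dab: "d = (a,b)" by (cases d)
  have "internal P d" using dis d E1 unfolding dissection_def by auto
  then have "\<not> is_edge P d" unfolding internal_def by auto
  moreover have "d \<noteq> (t,v)" "d \<noteq> (v,t)" using d E1 by auto
  ultimately have "\<not> is_edge P1 d" using EP1[OF tv(1,2,3) P1] dab by blast
  then show "internal P1 d" using d E1 unfolding internal_def by auto
next
  fix p assume p: "p \<in> E1"
  obtain a b where pab: "p = (a,b)" by (cases p)
  have "(b,a) \<in> E" using dis p E1 pab unfolding dissection_def by auto
  moreover have "(b,a) \<in> diag P1" using p E1 pab unfolding diag_def by auto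
  ultimately show "case p of (a, b) \<Rightarrow> (b, a) \<in> E1" using pab p E1 by auto
next
  fix d e assume "d \<in> E1" "e \<in> E1"
  then show "\<not> crosses d e" using dis E1 unfolding dissection_def by auto
qed

lemma piece_up:
  assumes dis: "dissection P E" and tvE: "(t,v) \<in> E"
    and P1: "P1 = {x\<in>P. x = t \<or> x = v \<or> cyc3 t x v}"
    and E1: "E1 = E \<inter> diag P1 - {(t,v),(v,t)}"
    and pc: "piece P1 E1 Q"
  shows "piece P E Q"
  unfolding piece_def
proof (intro conjI allI impI ballI)
  note tv = tv_facts[OF dis tvE]
  have QP1: "Q \<subseteq> P1" and c3: "3 \<le> card Q" using pc unfolding piece_def by auto
  show "Q \<subseteq> P" using QP1 P1 by auto
  show "3 \<le> card Q" by (rule c3)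
  fix d assume "is_edge Q d"
  then have "d \<in> E1 \<or> is_edge P1 d" using pc unfolding piece_def by blast
  then show "d \<in> E \<or> is_edge P d"
  proof
    assume "d \<in> E1" then show ?thesis using E1 by auto
  next
    assume "is_edge P1 d"
    then have "is_edge P d \<or> d = (t,v) \<or> d = (v,t)"
      using EP1[OF tv(1,2,3) P1, of "fst d" "snd d"] by auto
    then show ?thesis using tvE tv(6) by auto
  qed
next
  note tv = tv_facts[OF dis tvE]
  have QP1: "Q \<subseteq> P1" using pc unfolding piece_def by auto
  fix d assume dE: "d \<in> E" and dQ: "d \<in> diag Q"
  show "is_edge Q d"
  proof (cases "d \<in> E1")
    case True then show ?thesis using pc dQ unfolding piece_def by auto
  next
    case False
    have "d \<in> diag P1" using dQ QP1 unfolding diag_def by auto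
    then have "d = (t,v) \<or> d = (v,t)" using False dE E1 by auto
    moreover have "\<not> (\<exists>x\<in>Q. cyc3 v x t)"
    proof
      assume "\<exists>x\<in>Q. cyc3 v x t"
      then obtain x where "x \<in> Q" "cyc3 v x t" by blast
      then show False using QP1 P1 cyc3_dist cyc3_excl by fastforce
    qed
    ultimately show ?thesis using dQ unfolding is_edge_def by auto
  qed
qed


lemma LC4:
  assumes pol: "polygon P" and dis: "dissection P E" and tvE: "(t,v) \<in> E"
    and pc: "piece P E Q" and tQ: "t \<notin> Q"
    and x: "x \<in> Q" "cyc3 v x t" and y: "y \<in> Q" "cyc3 t y v"
  shows False
proof -
  note tv = tv_facts[OF dis tvE]
  have QP: "Q \<subseteq> P" and c3: "3 \<le> card Q" using pc unfolding piece_def by auto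
  have fQ: "finite Q" using pol QP unfolding polygon_def by (auto intro: finite_subset)
  obtain a b where ab: "a \<in> Q" "b \<in> Q" "a \<noteq> b" "cyc3 a t b" "\<forall>y\<in>Q. \<not> cyc3 a y b"
    using gap[OF fQ tQ] c3 by auto
  have "is_edge Q (a,b)" using edge_of_gap ab by auto
  then have e: "(a,b) \<in> E \<or> is_edge P (a,b)" using pc unfolding piece_def by blast
  have bva: "cyc3 b v a" using SM2[OF ab(4) _ _ x(2) y(2)] ab(5) x(1) y(1) by blast
  have cr: "crosses (a,b) (t,v)" unfolding crosses_iff using ab(4) bva by blast
  from e show False
  proof
    assume "(a,b) \<in> E" then show False using cr tvE dis unfolding dissection_def by blast
  next
    assume "is_edge P (a,b)" then show False using ab(4) bva tv(1,2) unfolding is_edge_def by auto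
  qed
qed

lemma is_edge_tv:
  assumes "t \<in> P" "v \<in> P" "t \<noteq> v" "P1 = {x\<in>P. x = t \<or> x = v \<or> cyc3 t x v}"
  shows "is_edge P1 (t,v)" "is_edge P1 (v,t)"
proof -
  have n: "\<not> (\<exists>x\<in>P1. cyc3 v x t)" using assms cyc3_dist cyc3_excl by fastforce
  show "is_edge P1 (t,v)" "is_edge P1 (v,t)" using n assms unfolding is_edge_def diag_def by auto
qed


lemma piece_restrict:
  assumes dis: "dissection P E" and tvE: "(t,v) \<in> E"
    and P1: "P1 = {x\<in>P. x = t \<or> x = v \<or> cyc3 t x v}"
    and E1: "E1 = E \<inter> diag P1 - {(t,v),(v,t)}"
    and pc: "piece P E Q" and QP1: "Q \<subseteq> P1"
  shows "piece P1 E1 Q"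
  unfolding piece_def
proof (intro conjI allI impI ballI)
  note tv = tv_facts[OF dis tvE]
  show "Q \<subseteq> P1" by (rule QP1)
  show "3 \<le> card Q" using pc unfolding piece_def by blast
  fix d assume ed: "is_edge Q d"
  then have dd: "d \<in> diag P1" using QP1 unfolding is_edge_def diag_def by auto
  have "d \<in> E \<or> is_edge P d" using pc ed unfolding piece_def by blast
  then show "d \<in> E1 \<or> is_edge P1 d"
  proof
    assume "d \<in> E"
    then have "d \<in> E1 \<or> d = (t,v) \<or> d = (v,t)" using dd E1 by auto
    then show ?thesis using is_edge_tv[OF tv(1,2,3) P1] by auto
  next
    assume "is_edge P d"
    moreover have "P1 \<subseteq> P" using P1 by auto
    ultimately show ?thesis using edge_sub[OF _ _ dd] by blast
  qed
next
  fix d assume "d \<in> E1" "d \<in> diag Q"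
  moreover have "d \<in> E" using \<open>d \<in> E1\<close> E1 by blast
  moreover have "\<forall>d\<in>E. d \<in> diag Q \<longrightarrow> is_edge Q d" using pc unfolding piece_def by blast
  ultimately show "is_edge Q d" by blast
qed


lemma piece_side:
  assumes pol: "polygon P" and dis: "dissection P E" and tvE: "(t,v) \<in> E"
    and P1: "P1 = {x\<in>P. x = t \<or> x = v \<or> cyc3 t x v}"
    and P2: "P2 = {x\<in>P. x = v \<or> x = t \<or> cyc3 v x t}"
    and pc: "piece P E Q"
  shows "Q \<subseteq> P1 \<or> Q \<subseteq> P2"
proof (rule ccontr)
  note tv = tv_facts[OF dis tvE]
  assume "\<not> (Q \<subseteq> P1 \<or> Q \<subseteq> P2)"
  then obtain x y where x: "x \<in> Q" "x \<notin> P1" and y: "y \<in> Q" "y \<notin> P2" by blast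
  have QP: "Q \<subseteq> P" using pc unfolding piece_def by auto
  have xc: "cyc3 v x t" using x QP P1 cyc3_split[of x t v] tv(3) by auto
  have yc: "cyc3 t y v" using y QP P2 cyc3_split[of y t v] tv(3) by auto
  consider "t \<in> Q" "v \<in> Q" | "t \<notin> Q" | "v \<notin> Q" by blast
  then show False
  proof cases
    case 1
    then have "(t,v) \<in> diag Q" using tv unfolding diag_def by auto
    then have "is_edge Q (t,v)" using pc tvE unfolding piece_def by auto
    then show False using x(1) xc y(1) yc unfolding is_edge_def by auto
  next
    case 2 then show False using LC4[OF pol dis tvE pc _ x(1) xc y(1) yc] by blast
  next
    case 3 then show False using LC4[OF pol dis tv(6) pc _ y(1) yc x(1) xc] by blast
  qed
qed


lemma edge_split:
  assumes "is_edge P (a,b)" "t \<in> P" "v \<in> P" "t \<noteq> v"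
    and P1: "P1 = {x\<in>P. x = t \<or> x = v \<or> cyc3 t x v}"
    and P2: "P2 = {x\<in>P. x = v \<or> x = t \<or> cyc3 v x t}"
  shows "(a,b) \<in> diag P1 \<or> (a,b) \<in> diag P2"
proof -
  have ab: "a \<in> P" "b \<in> P" "a \<noteq> b" using assms(1) unfolding is_edge_def diag_def by auto
  from assms(1) have "(\<not> (\<exists>x\<in>P. cyc3 a x b)) \<or> (\<not> (\<exists>x\<in>P. cyc3 b x a))"
    unfolding is_edge_def by simp
  then have "((a = t \<or> a = v \<or> cyc3 t a v) \<and> (b = t \<or> b = v \<or> cyc3 t b v)) \<or>
         ((a = v \<or> a = t \<or> cyc3 v a t) \<and> (b = v \<or> b = t \<or> cyc3 v b t))"
  proof
    assume "\<not> (\<exists>x\<in>P. cyc3 a x b)"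
    then show ?thesis using SM3[of a b t v] ab assms(2,3,4) by auto
  next
    assume "\<not> (\<exists>x\<in>P. cyc3 b x a)"
    then show ?thesis using SM3[of b a t v] ab assms(2,3,4) by auto
  qed
  then show ?thesis using ab P1 P2 unfolding diag_def by auto
qed

lemma E_split:
  assumes dis: "dissection P E" and tvE: "(t,v) \<in> E"
    and P1: "P1 = {x\<in>P. x = t \<or> x = v \<or> cyc3 t x v}"
    and P2: "P2 = {x\<in>P. x = v \<or> x = t \<or> cyc3 v x t}"
  shows "E \<subseteq> diag P1 \<union> diag P2"
proof
  note tv = tv_facts[OF dis tvE]
  fix d assume dE: "d \<in> E"
  obtain a b where dab: "d = (a,b)" by (cases d)
  have ab: "a \<in> P" "b \<in> P" "a \<noteq> b" using dis dE dab unfolding dissection_def internal_def diag_def by auto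
  have "\<not> crosses (a,b) (t,v)" using dis dE dab tvE unfolding dissection_def by auto
  then have "((a = t \<or> a = v \<or> cyc3 t a v) \<and> (b = t \<or> b = v \<or> cyc3 t b v)) \<or>
         ((a = v \<or> a = t \<or> cyc3 v a t) \<and> (b = v \<or> b = t \<or> cyc3 v b t))"
    using SM4 ab tv(3) by blast
  then show "d \<in> diag P1 \<union> diag P2" using ab P1 P2 dab unfolding diag_def by auto
qed


lemma frieze_transfer:
  assumes fr: "frieze P c'" and eq: "\<forall>i\<in>P. \<forall>k\<in>P. i \<noteq> k \<longrightarrow> c (i,k) = c' (i,k)"
  shows "frieze P c"
  unfolding frieze_def
proof (intro conjI ballI impI)
  fix d assume d: "d \<in> diag P"
  then have "c d = c' d" using eq unfolding diag_def by auto
  then show "runit (c d)" using fr d unfolding frieze_def by auto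
next
  fix i j k assume h: "i \<in> P" "j \<in> P" "k \<in> P" "distinct [i,j,k]"
  have e: "c (i,j) = c' (i,j)" "c (k,j) = c' (k,j)" "c (k,i) = c' (k,i)"
    "c (i,k) = c' (i,k)" "c (j,k) = c' (j,k)" "c (j,i) = c' (j,i)" using eq h by auto
  show "c (i,j) * rinv (c (k,j)) * c (k,i) = c (i,k) * rinv (c (j,k)) * c (j,i)"
    unfolding e using frieze_tri[OF fr h] .
next
  fix i j k l assume h: "i \<in> P" "j \<in> P" "k \<in> P" "l \<in> P" "crosses (i,k) (j,l)"
  have d: "distinct [i,j,k,l]" using h(5) unfolding crosses_def Let_def by simp
  have e: "c (i,k) = c' (i,k)" "c (i,j) = c' (i,j)" "c (l,j) = c' (l,j)" "c (l,k) = c' (l,k)"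
    "c (i,l) = c' (i,l)" "c (j,l) = c' (j,l)" "c (j,k) = c' (j,k)" using eq h d by auto
  show "c (i,k) = c (i,j) * rinv (c (l,j)) * c (l,k) + c (i,l) * rinv (c (j,l)) * c (j,k)"
    unfolding e using frieze_ex[OF fr h] .
qed

lemma weak_transfer:
  assumes wf: "weak_frieze P D c'" and D: "D \<subseteq> diag P" and eq: "\<forall>i\<in>P. \<forall>k\<in>P. c (i,k) = c' (i,k)"
  shows "weak_frieze P D c"
  unfolding weak_frieze_def
proof (intro conjI ballI allI impI)
  fix d assume d: "d \<in> D"
  then have "c d = c' d" using eq D unfolding diag_def by auto
  then show "runit (c d)" using wf d unfolding weak_frieze_def by auto
next
  fix i k t v assume i: "i \<in> P" and k: "k \<in> P" and h: "(t,v) \<in> D \<and> (v,t) \<in> D \<and> crosses (i,k) (t,v)"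
  have tv: "t \<in> P" "v \<in> P" using h D unfolding diag_def by auto
  have e: "c (i,k) = c' (i,k)" "c (i,t) = c' (i,t)" "c (v,t) = c' (v,t)" "c (v,k) = c' (v,k)"
    "c (i,v) = c' (i,v)" "c (t,v) = c' (t,v)" "c (t,k) = c' (t,k)" using eq i k tv by auto
  show "c (i,k) = c (i,t) * rinv (c (v,t)) * c (v,k) + c (i,v) * rinv (c (t,v)) * c (t,k)"
    unfolding e using wf i k h unfolding weak_frieze_def by blast
qed

lemma weak_restrict:
  assumes "weak_frieze P E c" "P1 \<subseteq> P" "E1 \<subseteq> E"
  shows "weak_frieze P1 E1 c"
  using assms unfolding weak_frieze_def by blast

definition agree :: "'v::linorder set \<Rightarrow> ('v \<times> 'v) set \<Rightarrow> ('v set \<Rightarrow> ('v \<times> 'v \<Rightarrow> 'a::ring_1)) \<Rightarrow> ('v \<times> 'v \<Rightarrow> 'a) \<Rightarrow> bool" where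
  "agree P E cs c \<longleftrightarrow> (\<forall>Q. piece P E Q \<longrightarrow> (\<forall>d\<in>diag Q. c d = cs Q d))"

definition compat :: "'v::linorder set \<Rightarrow> ('v \<times> 'v) set \<Rightarrow> ('v set \<Rightarrow> ('v \<times> 'v \<Rightarrow> 'a::ring_1)) \<Rightarrow> bool" where
  "compat P E cs \<longleftrightarrow> (\<forall>Q Q' t v. piece P E Q \<longrightarrow> piece P E Q' \<longrightarrow> (t,v) \<in> E \<longrightarrow>
      (t,v) \<in> diag Q \<longrightarrow> (t,v) \<in> diag Q' \<longrightarrow> cs Q (t,v) = cs Q' (t,v))"

definition good :: "'v::linorder set \<Rightarrow> ('v \<times> 'v) set \<Rightarrow> ('v set \<Rightarrow> ('v \<times> 'v \<Rightarrow> 'a::ring_1)) \<Rightarrow> ('v \<times> 'v \<Rightarrow> 'a) \<Rightarrow> bool" where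
  "good P E cs c \<longleftrightarrow> (\<forall>x. c (x,x) = 0) \<and> agree P E cs c \<and> weak_frieze P E c
     \<and> (\<forall>c'. agree P E cs c' \<and> weak_frieze P E c' \<longrightarrow> (\<forall>d\<in>diag P. c' d = c d))
     \<and> ((\<forall>d\<in>diag P. runit (c d)) \<longrightarrow> frieze P c)"


lemma good_D:
  assumes "good P E cs c"
  shows "\<forall>x. c (x,x) = 0" "agree P E cs c" "weak_frieze P E c"
    "\<And>c'. agree P E cs c' \<Longrightarrow> weak_frieze P E c' \<Longrightarrow> \<forall>d\<in>diag P. c' d = c d"
    "(\<forall>d\<in>diag P. runit (c d)) \<Longrightarrow> frieze P c"
  using assms unfolding good_def by blast+

lemma main:
  fixes P :: "'v::linorder set" and E :: "('v \<times> 'v) set" and cs :: "'v set \<Rightarrow> ('v \<times> 'v \<Rightarrow> 'a::ring_1)"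
  shows "card E = n \<Longrightarrow> polygon P \<Longrightarrow> dissection P E \<Longrightarrow> (\<forall>Q. piece P E Q \<longrightarrow> frieze Q (cs Q)) \<Longrightarrow>
    compat P E cs \<Longrightarrow> (\<forall>d. is_edge P d \<longrightarrow> (\<exists>Q. piece P E Q \<and> d \<in> diag Q)) \<and> (\<exists>c. good P E cs c)"
proof (induction n arbitrary: P E rule: less_induct)
  case (less n P E)
  have pol: "polygon P" and dis: "dissection P E" and fr: "\<forall>Q. piece P E Q \<longrightarrow> frieze Q (cs Q)"
    and cp: "compat P E cs" using less.prems by auto
  show ?case
  proof (cases "E = {}")
    case True
    have pcP: "piece P E Q \<longleftrightarrow> Q = P" for Q using piece_empty piece_self pol True by blast
    define c where "c = (\<lambda>d. if fst d = snd d then 0 else cs P d)"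
    have agr: "agree P E cs c" unfolding agree_def c_def using pcP by (auto simp: diag_def)
    have wf: "weak_frieze P E c" unfolding weak_frieze_def True by simp
    have uq: "\<forall>c'. agree P E cs c' \<and> weak_frieze P E c' \<longrightarrow> (\<forall>d\<in>diag P. c' d = c d)"
      using agr pcP unfolding agree_def by auto
    have frP: "frieze P (cs P)" using fr pcP by auto
    have frz: "frieze P c"
      by (rule frieze_transfer[OF frP]) (auto simp: c_def)
    have z: "\<forall>x. c (x,x) = 0" unfolding c_def by simp
    have "\<exists>c. good P E cs c" unfolding good_def using z agr wf uq frz by blast
    moreover have "\<forall>d. is_edge P d \<longrightarrow> (\<exists>Q. piece P E Q \<and> d \<in> diag Q)"
      using pcP unfolding is_edge_def by auto
    ultimately show ?thesis by blast
  next
    case False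
    then obtain t v where tvE: "(t,v) \<in> E" by auto
    note tv = tv_facts[OF dis tvE]
    define P1 where "P1 = {x\<in>P. x = t \<or> x = v \<or> cyc3 t x v}"
    define P2 where "P2 = {x\<in>P. x = v \<or> x = t \<or> cyc3 v x t}"
    define E1 where "E1 = E \<inter> diag P1 - {(t,v),(v,t)}"
    define E2 where "E2 = E \<inter> diag P2 - {(v,t),(t,v)}"
    have finP: "finite P" using pol unfolding polygon_def by auto
    have Ed: "E \<subseteq> diag P" using dis unfolding dissection_def internal_def by auto
    have finE: "finite E"
      by (rule finite_subset[OF Ed]) (use finP in \<open>auto simp: diag_def intro: finite_subset[of _ "P \<times> P"]\<close>)
    have E1E: "E1 \<subseteq> E" "E2 \<subseteq> E" unfolding E1_def E2_def by auto
    have c1: "card E1 < n" "card E2 < n"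
    proof -
      have "E1 \<subset> E" using E1E tvE unfolding E1_def by auto
      then show "card E1 < n" using finE less.prems(1) psubset_card_mono by blast
      have "E2 \<subset> E" using E1E tvE unfolding E2_def by auto
      then show "card E2 < n" using finE less.prems(1) psubset_card_mono by blast
    qed
    have pol1: "polygon P1" by (rule polygon_P1[OF pol dis tvE P1_def])
    have pol2: "polygon P2" by (rule polygon_P1[OF pol dis tv(6) P2_def])
    have dis1: "dissection P1 E1" by (rule dissection_P1[OF dis tvE P1_def E1_def])
    have dis2: "dissection P2 E2" by (rule dissection_P1[OF dis tv(6) P2_def E2_def])
    have up1: "piece P E Q" if "piece P1 E1 Q" for Q by (rule piece_up[OF dis tvE P1_def E1_def that])
    have up2: "piece P E Q" if "piece P2 E2 Q" for Q by (rule piece_up[OF dis tv(6) P2_def E2_def that])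
    have fr1: "\<forall>Q. piece P1 E1 Q \<longrightarrow> frieze Q (cs Q)" using fr up1 by auto
    have fr2: "\<forall>Q. piece P2 E2 Q \<longrightarrow> frieze Q (cs Q)" using fr up2 by auto
    have cp1: "compat P1 E1 cs" using cp up1 E1E unfolding compat_def by blast
    have cp2: "compat P2 E2 cs" using cp up2 E1E unfolding compat_def by blast
    have IH1: "(\<forall>d. is_edge P1 d \<longrightarrow> (\<exists>Q. piece P1 E1 Q \<and> d \<in> diag Q)) \<and> (\<exists>c. good P1 E1 cs c)"
      by (rule less.IH[OF c1(1) refl pol1 dis1 fr1 cp1])
    have IH2: "(\<forall>d. is_edge P2 d \<longrightarrow> (\<exists>Q. piece P2 E2 Q \<and> d \<in> diag Q)) \<and> (\<exists>c. good P2 E2 cs c)"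
      by (rule less.IH[OF c1(2) refl pol2 dis2 fr2 cp2])
    obtain cc1 where g1: "good P1 E1 cs cc1" using IH1 by blast
    obtain cc2 where g2: "good P2 E2 cs cc2" using IH2 by blast
    have P1P: "P1 \<subseteq> P" "P2 \<subseteq> P" unfolding P1_def P2_def by auto
    have tP: "t \<in> P1" "v \<in> P1" "t \<in> P2" "v \<in> P2" using tv unfolding P1_def P2_def by auto
    have e1: "is_edge P1 (t,v)" using is_edge_tv[OF tv(1,2,3) P1_def] by blast
    have e2: "is_edge P2 (t,v)" using is_edge_tv[OF tv(2,1) tv(3)[symmetric] P2_def] by blast
    obtain Q1 where Q1: "piece P1 E1 Q1" "(t,v) \<in> diag Q1" using IH1 e1 by blast
    obtain Q2 where Q2: "piece P2 E2 Q2" "(t,v) \<in> diag Q2" using IH2 e2 by blast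
    have Q1': "(v,t) \<in> diag Q1" using Q1 unfolding diag_def by auto
    have Q2': "(v,t) \<in> diag Q2" using Q2 unfolding diag_def by auto
    have ag1: "agree P1 E1 cs cc1" and ag2: "agree P2 E2 cs cc2" using good_D(2)[OF g1] good_D(2)[OF g2] by auto
    have v1: "cc1 (t,v) = cs Q1 (t,v)" "cc1 (v,t) = cs Q1 (v,t)" using ag1 Q1 Q1' unfolding agree_def by auto
    have v2: "cc2 (t,v) = cs Q2 (t,v)" "cc2 (v,t) = cs Q2 (v,t)" using ag2 Q2 Q2' unfolding agree_def by auto
    have cpD: "cs Q1 (a,b) = cs Q2 (a,b)" if "(a,b) \<in> E" "(a,b) \<in> diag Q1" "(a,b) \<in> diag Q2" for a b
      using cp up1[OF Q1(1)] up2[OF Q2(1)] that unfolding compat_def by blast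
    have eqtv: "cc1 (t,v) = cc2 (t,v)" "cc1 (v,t) = cc2 (v,t)"
      using cpD[of t v] cpD[of v t] Q1 Q2 Q1' Q2' v1 v2 tvE tv(6) by auto
    have frQ1: "frieze Q1 (cs Q1)" using fr1 Q1 by auto
    have tvQ1: "t \<in> Q1" "v \<in> Q1" using Q1 unfolding diag_def by auto
    have utv: "runit (cc1 (t,v))" "runit (cc1 (v,t))"
      using v1 frieze_unit[OF frQ1] tvQ1 tv(3) by auto
    have z1: "\<forall>x. cc1 (x,x) = 0" and z2: "\<forall>x. cc2 (x,x) = 0" using good_D(1)[OF g1] good_D(1)[OF g2] by auto
    define X where "X = (\<lambda>i k. (cyc3 t i v \<and> cyc3 v k t) \<or> (cyc3 v i t \<and> cyc3 t k v))"
    define c0 where "c0 = (\<lambda>(i,k). if i = k then 0 else if i \<in> P1 \<and> k \<in> P1 then cc1 (i,k)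
        else if i \<in> P2 \<and> k \<in> P2 then cc2 (i,k) else 0)"
    define c where "c = (\<lambda>(i,k). if X i k then c0 (i,t) * rinv (c0 (v,t)) * c0 (v,k) + c0 (i,v) * rinv (c0 (t,v)) * c0 (t,k)
        else c0 (i,k))"
    have in1: "x = t \<or> x = v \<or> cyc3 t x v" if "x \<in> P1" for x using that unfolding P1_def by auto
    have in2: "x = t \<or> x = v \<or> cyc3 v x t" if "x \<in> P2" for x using that unfolding P2_def by auto
    have nX1: "\<not> X i k" if "i \<in> P1" "k \<in> P1" for i k
      using in1[OF that(1)] in1[OF that(2)] unfolding X_def cyc3_def by (smt (z3) ordf)
    have nX2: "\<not> X i k" if "i \<in> P2" "k \<in> P2" for i k
      using in2[OF that(1)] in2[OF that(2)] unfolding X_def cyc3_def by (smt (z3) ordf)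
    have nXt: "\<not> X i t" "\<not> X t k" "\<not> X i v" "\<not> X v k" for i k
      unfolding X_def cyc3_def by (smt (z3) ordf)+
    have int12: "x = t \<or> x = v" if "x \<in> P1" "x \<in> P2" for x
      using in1[OF that(1)] in2[OF that(2)] unfolding cyc3_def by (smt (z3) ordf)
    have cP1: "c (i,k) = cc1 (i,k)" if "i \<in> P1" "k \<in> P1" for i k
      using nX1[OF that] that z1 by (simp add: c_def c0_def)
    have cP2: "c (i,k) = cc2 (i,k)" if "i \<in> P2" "k \<in> P2" for i k
    proof (cases "i = k")
      case True then show ?thesis using nX2[OF that] z2 by (simp add: c_def c0_def)
    next
      case ne: False
      show ?thesis
      proof (cases "i \<in> P1 \<and> k \<in> P1")
        case True
        then have "(i = t \<and> k = v) \<or> (i = v \<and> k = t)" using int12 that ne by blast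
        then show ?thesis using cP1 True eqtv by auto
      next
        case False
        then have "c0 (i,k) = cc2 (i,k)" using that ne unfolding c0_def by auto
        then show ?thesis using nX2[OF that] by (simp add: c_def)
      qed
    qed
    have nXx: "\<not> X x x" for x unfolding X_def cyc3_def by (smt (z3) ordf)
    have cz: "\<forall>x. c (x,x) = 0" using nXx by (simp add: c_def c0_def)
    have ccross: "\<forall>i\<in>P. \<forall>k\<in>P. X i k \<longrightarrow>
        c (i,k) = c (i,t) * rinv (c (v,t)) * c (v,k) + c (i,v) * rinv (c (t,v)) * c (t,k)"
      using nXt by (simp add: c_def)
    have wfc1: "weak_frieze P1 E1 cc1" and wfc2: "weak_frieze P2 E2 cc2" using good_D(3)[OF g1] good_D(3)[OF g2] by auto
    have E1d: "E1 \<subseteq> diag P1" "E2 \<subseteq> diag P2" unfolding E1_def E2_def by auto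
    have wf1: "weak_frieze P1 E1 c" by (rule weak_transfer[OF wfc1 E1d(1)]) (use cP1 in auto)
    have wf2: "weak_frieze P2 E2 c" by (rule weak_transfer[OF wfc2 E1d(2)]) (use cP2 in auto)
    have ut: "runit (c (t,v))" "runit (c (v,t))" using utv cP1 tP by auto
    have Es: "E \<subseteq> diag P1 \<union> diag P2" by (rule E_split[OF dis tvE P1_def P2_def])
    have WF: "weak_frieze P E c"
      by (rule WG[OF tv(1,2,3) P1_def P2_def E1_def E2_def Es tvE tv(6) wf1 wf2 cz ut])
         (use ccross in \<open>simp add: X_def\<close>)
    have AG: "agree P E cs c" unfolding agree_def
    proof (intro allI impI ballI)
      fix Q d assume pQ: "piece P E Q" and d: "d \<in> diag Q"
      have "Q \<subseteq> P1 \<or> Q \<subseteq> P2" by (rule piece_side[OF pol dis tvE P1_def P2_def pQ])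
      then show "c d = cs Q d"
      proof
        assume QP: "Q \<subseteq> P1"
        have "piece P1 E1 Q" by (rule piece_restrict[OF dis tvE P1_def E1_def pQ QP])
        then have "cc1 d = cs Q d" using ag1 d unfolding agree_def by auto
        moreover have "c d = cc1 d" using cP1 d QP unfolding diag_def by auto
        ultimately show ?thesis by simp
      next
        assume QP: "Q \<subseteq> P2"
        have "piece P2 E2 Q" by (rule piece_restrict[OF dis tv(6) P2_def E2_def pQ QP])
        then have "cc2 d = cs Q d" using ag2 d unfolding agree_def by auto
        moreover have "c d = cc2 d" using cP2 d QP unfolding diag_def by auto
        ultimately show ?thesis by simp
      qed
    qed
    have sp: "x = t \<or> x = v \<or> cyc3 t x v \<or> cyc3 v x t" for x using cyc3_split[of x t v] tv by blast
    have UQ: "\<forall>c'. agree P E cs c' \<and> weak_frieze P E c' \<longrightarrow> (\<forall>d\<in>diag P. c' d = c d)"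
    proof (intro allI impI ballI)
      fix c' d assume h: "agree P E cs c' \<and> weak_frieze P E c'" and d: "d \<in> diag P"
      have a1: "agree P1 E1 cs c'" using h up1 unfolding agree_def by auto
      have a2: "agree P2 E2 cs c'" using h up2 unfolding agree_def by auto
      have w1: "weak_frieze P1 E1 c'" using weak_restrict h P1P E1E by blast
      have w2: "weak_frieze P2 E2 c'" using weak_restrict h P1P E1E by blast
      have eq1: "\<forall>d\<in>diag P1. c' d = cc1 d" using good_D(4)[OF g1 a1 w1] .
      have eq2: "\<forall>d\<in>diag P2. c' d = cc2 d" using good_D(4)[OF g2 a2 w2] .
      have EQ: "c' (a,b) = c (a,b)" if "(a \<in> P1 \<and> b \<in> P1) \<or> (a \<in> P2 \<and> b \<in> P2)" "a \<noteq> b" for a b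
        using that eq1 eq2 cP1 cP2 unfolding diag_def by auto
      obtain i k where dik: "d = (i,k)" by (cases d)
      have ik: "i \<in> P" "k \<in> P" "i \<noteq> k" using d dik unfolding diag_def by auto
      show "c' d = c d"
      proof (cases "(i \<in> P1 \<and> k \<in> P1) \<or> (i \<in> P2 \<and> k \<in> P2)")
        case True then show ?thesis using EQ ik dik by auto
      next
        case False
        have Xik: "X i k" using False ik sp[of i] sp[of k] tv unfolding X_def P1_def P2_def by auto
        have cr: "crosses (i,k) (t,v)" using CY6 Xik unfolding X_def by blast
        have "c' (i,k) = c' (i,t) * rinv (c' (v,t)) * c' (v,k) + c' (i,v) * rinv (c' (t,v)) * c' (t,k)"
          using h ik tvE tv(6) cr unfolding weak_frieze_def by blast
        moreover have "c' (i,t) = c (i,t)" "c' (v,t) = c (v,t)" "c' (v,k) = c (v,k)"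
          "c' (i,v) = c (i,v)" "c' (t,v) = c (t,v)" "c' (t,k) = c (t,k)"
        proof -
          have nd: "i \<noteq> t" "i \<noteq> v" "k \<noteq> t" "k \<noteq> v" using Xik cyc3_dist unfolding X_def by metis+
          have sd: "(i \<in> P1 \<and> k \<in> P2) \<or> (i \<in> P2 \<and> k \<in> P1)" using Xik ik unfolding X_def P1_def P2_def by auto
          have ii: "(i \<in> P1 \<and> t \<in> P1 \<and> v \<in> P1) \<or> (i \<in> P2 \<and> t \<in> P2 \<and> v \<in> P2)" using sd tP by blast
          have kk: "(k \<in> P1 \<and> t \<in> P1 \<and> v \<in> P1) \<or> (k \<in> P2 \<and> t \<in> P2 \<and> v \<in> P2)" using sd tP by blast
          show "c' (i,t) = c (i,t)" using EQ[of i t] ii nd by blast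
          show "c' (v,t) = c (v,t)" using EQ[of v t] tP tv(3) by blast
          show "c' (v,k) = c (v,k)" using EQ[of v k] kk nd by blast
          show "c' (i,v) = c (i,v)" using EQ[of i v] ii nd by blast
          show "c' (t,v) = c (t,v)" using EQ[of t v] tP tv(3) by blast
          show "c' (t,k) = c (t,k)" using EQ[of t k] kk nd by blast
        qed
        ultimately show ?thesis using ccross Xik ik dik by auto
      qed
    qed
    have FR: "(\<forall>d\<in>diag P. runit (c d)) \<longrightarrow> frieze P c"
    proof
      assume un: "\<forall>d\<in>diag P. runit (c d)"
      have un1: "\<forall>d\<in>diag P1. runit (cc1 d)"
      proof
        fix d assume d: "d \<in> diag P1"
        obtain a b where dab: "d = (a,b)" by (cases d)
        have ab: "a \<in> P1" "b \<in> P1" "(a,b) \<in> diag P" using d dab P1P unfolding diag_def by auto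
        show "runit (cc1 d)" using un ab cP1[of a b] dab by auto
      qed
      have un2: "\<forall>d\<in>diag P2. runit (cc2 d)"
      proof
        fix d assume d: "d \<in> diag P2"
        obtain a b where dab: "d = (a,b)" by (cases d)
        have ab: "a \<in> P2" "b \<in> P2" "(a,b) \<in> diag P" using d dab P1P unfolding diag_def by auto
        show "runit (cc2 d)" using un ab cP2[of a b] dab by auto
      qed
      have "frieze P1 cc1" using good_D(5)[OF g1 un1] .
      then have f1: "frieze P1 c" by (rule frieze_transfer) (use cP1 in auto)
      have "frieze P2 cc2" using good_D(5)[OF g2 un2] .
      then have f2: "frieze P2 c" by (rule frieze_transfer) (use cP2 in auto)
      show "frieze P c"
        by (rule FG[OF tv(1,2,3) P1_def P2_def f1 f2 un]) (use ccross in \<open>simp add: X_def\<close>)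
    qed
    have "good P E cs c" unfolding good_def using cz AG WF UQ FR by blast
    moreover have "\<forall>d. is_edge P d \<longrightarrow> (\<exists>Q. piece P E Q \<and> d \<in> diag Q)"
    proof (intro allI impI)
      fix d assume ed: "is_edge P d"
      obtain a b where dab: "d = (a,b)" by (cases d)
      have "(a,b) \<in> diag P1 \<or> (a,b) \<in> diag P2"
        by (rule edge_split[OF ed[unfolded dab] tv(1,2,3) P1_def P2_def])
      then show "\<exists>Q. piece P E Q \<and> d \<in> diag Q"
      proof
        assume "(a,b) \<in> diag P1"
        then have "is_edge P1 d" using edge_sub[OF ed P1P(1)] dab by auto
        then show ?thesis using IH1 up1 by blast
      next
        assume "(a,b) \<in> diag P2"
        then have "is_edge P2 d" using edge_sub[OF ed P1P(2)] dab by auto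
        then show ?thesis using IH2 up2 by blast
      qed
    qed
    ultimately show ?thesis by blast
  qed
qed


theorem theoremD:
  fixes P :: "'v::linorder set" and E :: "('v \<times> 'v) set"
    and cs :: "'v set \<Rightarrow> ('v \<times> 'v \<Rightarrow> 'a::ring_1)"
  assumes "polygon P"
    and "dissection P E"
    and "\<And>Q. piece P E Q \<Longrightarrow> frieze Q (cs Q)"
    and "\<And>Q Q' t v. piece P E Q \<Longrightarrow> piece P E Q' \<Longrightarrow> (t, v) \<in> E
           \<Longrightarrow> (t, v) \<in> diag Q \<Longrightarrow> (t, v) \<in> diag Q' \<Longrightarrow> cs Q (t, v) = cs Q' (t, v)"
  shows "\<exists>c :: 'v \<times> 'v \<Rightarrow> 'a.
           (\<forall>Q. piece P E Q \<longrightarrow> (\<forall>d\<in>diag Q. c d = cs Q d))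
         \<and> weak_frieze P E c
         \<and> (\<forall>c' :: 'v \<times> 'v \<Rightarrow> 'a.
               (\<forall>Q. piece P E Q \<longrightarrow> (\<forall>d\<in>diag Q. c' d = cs Q d)) \<and> weak_frieze P E c'
               \<longrightarrow> (\<forall>d\<in>diag P. c' d = c d))
         \<and> ((\<forall>d\<in>diag P. runit (c d)) \<longrightarrow> frieze P c)"
proof -
  have cp: "compat P E cs" using assms(4) unfolding compat_def by blast
  have fr: "\<forall>Q. piece P E Q \<longrightarrow> frieze Q (cs Q)" using assms(3) by blast
  have "\<exists>c. good P E cs c" using main[OF refl assms(1) assms(2) fr cp] by blast
  then obtain c where g: "good P E cs c" by blast
  show ?thesis using g unfolding good_def agree_def by blast
qed

end
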